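(* Consider an RBM with observed variables $X\in\{-1,1\}^n$ as in the context. Fix $\delta>0$, $\epsilon>0$, $\zeta>0$. Suppose that for every observed variable $u$ we are given a set $n(u)$ which is a subset of the MRF neighborhood of $u$ and contains every $i$ for which there is $T\subseteq[n]$ with $u,i\in T$ and $|\hat f(T)|\ge\zeta$. Suppose that we are given $M$ i.i.d. samples of $X$ from the RBM and run the regression procedure of the context at each $u$. There is an absolute constant $C>0$ such that if \[M\ge C\,\gamma^2\ln(8\cdot n\cdot 2^D/\delta)/\epsilon^2\quad\text{and}\quad\zeta\le\frac{\sqrt\epsilon}{\psi\sqrt{1+e^{2\gamma}}},\] then with probability at least $1-\delta$, for all observed variables $u$, \[\mathbb{E}\big[(\mathbb{P}(X_u=1|X_{[n]\setminus\{u\}})-\sigma(\hat w_u\cdot z_u))^2\big]\le\epsilon,\] where the expectation is over $X$ drawn from the marginal of the RBM (with $\hat w_u$ fixed) and $z_u$ is the feature vector of $X$ at $u$.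
   Context: RBM: $\mathbb{P}(X=x,Y=y)\propto\exp(x^TJy+h^Tx+g^Ty)$ over observed $X\in\{-1,1\}^n$ and latent $Y\in\{-1,1\}^m$. The marginal of $X$ is $\propto\exp(f(x))$, $f(x)=\sum_j\rho(J_j\cdot x+g_j)+h^Tx$, $\rho(t)=\log(e^t+e^{-t})$, $J_j$ the $j$-th column of $J$; $f=\sum_{T\subseteq[n]}\hat f(T)\chi_T$, $\chi_T(x)=\prod_{i\in T}x_i$. MRF neighborhood of $u$: all $i\ne u$ with $\hat f(T)\ne0$ for some $T\ni u,i$. $D$: max size of an MRF neighborhood; $\gamma=\max_u\sum_{T\ni u}|\hat f(T)|$; $\psi:=\max_{u\in[n]}|\{T\subseteq[n]:u\in T,\ \hat f(T)\ne0\}|$. $\sigma(t)=1/(1+e^{-t})$. Regression at $u$: feature vector $z_u=(\chi_T(X))_{T\subseteq n(u)}\in\{-1,1\}^{2^{|n(u)|}}$, label $y=X_u$; from samples $(z^{(k)},y^{(k)})_{k=1}^M$, $\hat w_u\in\arg\min\{\frac1M\sum_{k=1}^M\ln(1+e^{-y^{(k)}(w\cdot z^{(k)})}):w\in\mathbb{R}^{2^{|n(u)|}},\ \|w\|_1\le2\gamma\}$. *)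

theory Defs
  imports Complex_Main "HOL-Library.FuncSet"
begin

definition cube :: "nat \<Rightarrow> (nat \<Rightarrow> real) set" where
  "cube n = {x. (\<forall>i<n. x i = 1 \<or> x i = -1) \<and> (\<forall>i\<ge>n. x i = 0)}"

definition rbm_weight :: "nat \<Rightarrow> nat \<Rightarrow> (nat \<Rightarrow> nat \<Rightarrow> real) \<Rightarrow> (nat \<Rightarrow> real) \<Rightarrow> (nat \<Rightarrow> real)
    \<Rightarrow> (nat \<Rightarrow> real) \<Rightarrow> real" where
  "rbm_weight n m J h g x =
     (\<Sum>y\<in>cube m. exp ((\<Sum>i<n. \<Sum>j<m. x i * J i j * y j) + (\<Sum>i<n. h i * x i) + (\<Sum>j<m. g j * y j)))"

definition rbm_marginal :: "nat \<Rightarrow> nat \<Rightarrow> (nat \<Rightarrow> nat \<Rightarrow> real) \<Rightarrow> (nat \<Rightarrow> real) \<Rightarrow> (nat \<Rightarrow> real)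
    \<Rightarrow> (nat \<Rightarrow> real) \<Rightarrow> real" where
  "rbm_marginal n m J h g x =
     rbm_weight n m J h g x / (\<Sum>x'\<in>cube n. rbm_weight n m J h g x')"

definition rho :: "real \<Rightarrow> real" where
  "rho t = ln (exp t + exp (- t))"

definition rbm_f :: "nat \<Rightarrow> nat \<Rightarrow> (nat \<Rightarrow> nat \<Rightarrow> real) \<Rightarrow> (nat \<Rightarrow> real) \<Rightarrow> (nat \<Rightarrow> real)
    \<Rightarrow> (nat \<Rightarrow> real) \<Rightarrow> real" where
  "rbm_f n m J h g x = (\<Sum>j<m. rho ((\<Sum>i<n. J i j * x i) + g j)) + (\<Sum>i<n. h i * x i)"

definition chi :: "nat set \<Rightarrow> (nat \<Rightarrow> real) \<Rightarrow> real" where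
  "chi T x = (\<Prod>i\<in>T. x i)"

definition fourier_coeff :: "nat \<Rightarrow> ((nat \<Rightarrow> real) \<Rightarrow> real) \<Rightarrow> nat set \<Rightarrow> real" where
  "fourier_coeff n F T = (\<Sum>x\<in>cube n. F x * chi T x) / 2 ^ n"

definition mrf_nbhd :: "nat \<Rightarrow> ((nat \<Rightarrow> real) \<Rightarrow> real) \<Rightarrow> nat \<Rightarrow> nat set" where
  "mrf_nbhd n F u = {i\<in>{..<n}. i \<noteq> u \<and>
      (\<exists>T. T \<subseteq> {..<n} \<and> u \<in> T \<and> i \<in> T \<and> fourier_coeff n F T \<noteq> 0)}"

definition max_degree :: "nat \<Rightarrow> ((nat \<Rightarrow> real) \<Rightarrow> real) \<Rightarrow> nat" where
  "max_degree n F = Max (insert 0 ((\<lambda>u. card (mrf_nbhd n F u)) ` {..<n}))"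

definition gamma_param :: "nat \<Rightarrow> ((nat \<Rightarrow> real) \<Rightarrow> real) \<Rightarrow> real" where
  "gamma_param n F = Max (insert 0
     ((\<lambda>u. \<Sum>T\<in>{T. T \<subseteq> {..<n} \<and> u \<in> T}. \<bar>fourier_coeff n F T\<bar>) ` {..<n}))"

definition psi_param :: "nat \<Rightarrow> ((nat \<Rightarrow> real) \<Rightarrow> real) \<Rightarrow> nat" where
  "psi_param n F = Max (insert 0
     ((\<lambda>u. card {T. T \<subseteq> {..<n} \<and> u \<in> T \<and> fourier_coeff n F T \<noteq> 0}) ` {..<n}))"

definition cond_prob_one :: "nat \<Rightarrow> nat \<Rightarrow> (nat \<Rightarrow> nat \<Rightarrow> real) \<Rightarrow> (nat \<Rightarrow> real) \<Rightarrow> (nat \<Rightarrow> real)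
    \<Rightarrow> nat \<Rightarrow> (nat \<Rightarrow> real) \<Rightarrow> real" where
  "cond_prob_one n m J h g u x =
     rbm_marginal n m J h g (x(u := 1)) /
       (rbm_marginal n m J h g (x(u := 1)) + rbm_marginal n m J h g (x(u := -1)))"

definition sigmoid :: "real \<Rightarrow> real" where
  "sigmoid t = 1 / (1 + exp (- t))"

text \<open>w \<cdot> z_u(x), where z_u(x) = (chi_T(x))_{T \<subseteq> N}; w is indexed by subsets of N.\<close>
definition feat_dot :: "nat set \<Rightarrow> (nat set \<Rightarrow> real) \<Rightarrow> (nat \<Rightarrow> real) \<Rightarrow> real" where
  "feat_dot N w x = (\<Sum>T\<in>Pow N. w T * chi T x)"

definition l1_norm :: "nat set \<Rightarrow> (nat set \<Rightarrow> real) \<Rightarrow> real" where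
  "l1_norm N w = (\<Sum>T\<in>Pow N. \<bar>w T\<bar>)"

definition log_loss :: "nat set \<Rightarrow> nat \<Rightarrow> nat \<Rightarrow> (nat \<Rightarrow> nat \<Rightarrow> real) \<Rightarrow> (nat set \<Rightarrow> real) \<Rightarrow> real" where
  "log_loss N u M S w =
     (\<Sum>k<M. ln (1 + exp (- (S k u * feat_dot N w (S k))))) / real M"

definition is_regression_estimate ::
  "nat set \<Rightarrow> nat \<Rightarrow> nat \<Rightarrow> (nat \<Rightarrow> nat \<Rightarrow> real) \<Rightarrow> real \<Rightarrow> (nat set \<Rightarrow> real) \<Rightarrow> bool" where
  "is_regression_estimate N u M S \<gamma> w \<longleftrightarrow>
     l1_norm N w \<le> 2 * \<gamma> \<and>
     (\<forall>w'. l1_norm N w' \<le> 2 * \<gamma> \<longrightarrow> log_loss N u M S w \<le> log_loss N u M S w')"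

definition sample_prob :: "nat \<Rightarrow> nat \<Rightarrow> (nat \<Rightarrow> nat \<Rightarrow> real) \<Rightarrow> (nat \<Rightarrow> real) \<Rightarrow> (nat \<Rightarrow> real)
    \<Rightarrow> nat \<Rightarrow> ((nat \<Rightarrow> nat \<Rightarrow> real) \<Rightarrow> bool) \<Rightarrow> real" where
  "sample_prob n m J h g M E =
     (\<Sum>S\<in>{S\<in>PiE {..<M} (\<lambda>_. cube n). E S}. \<Prod>k<M. rbm_marginal n m J h g (S k))"

definition pred_mse :: "nat \<Rightarrow> nat \<Rightarrow> (nat \<Rightarrow> nat \<Rightarrow> real) \<Rightarrow> (nat \<Rightarrow> real) \<Rightarrow> (nat \<Rightarrow> real)
    \<Rightarrow> nat \<Rightarrow> nat set \<Rightarrow> (nat set \<Rightarrow> real) \<Rightarrow> real" where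
  "pred_mse n m J h g u N w =
     (\<Sum>x\<in>cube n. rbm_marginal n m J h g x *
        (cond_prob_one n m J h g u x - sigmoid (feat_dot N w x))\<^sup>2)"

end

theory Submission
  imports Defs "HOL-Probability.Hoeffding"
begin

definition EE :: "'a set \<Rightarrow> ('a \<Rightarrow> real) \<Rightarrow> nat \<Rightarrow> ((nat \<Rightarrow> 'a) \<Rightarrow> real) \<Rightarrow> real" where
  "EE A q M f = (\<Sum>S\<in>PiE {..<M} (\<lambda>_. A). (\<Prod>k<M. q (S k)) * f S)"

lemma EE_0: "EE A q 0 f = f (\<lambda>_. undefined)"
  by (simp add: EE_def)

lemma EE_Suc:
  assumes "finite A"
  shows "EE A q (Suc M) f = EE A q M (\<lambda>S. \<Sum>x\<in>A. q x * f (S(M:=x)))"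
proof -
  have PI: "PiE {..<Suc M} (\<lambda>_. A) = (\<lambda>(y, g). g(M := y)) ` (A \<times> PiE {..<M} (\<lambda>_. A))"
    using PiE_insert_eq[of M "{..<M}" "\<lambda>_. A"] by (simp add: lessThan_Suc)
  have inj: "inj_on (\<lambda>(y, g). g(M := y)) (A \<times> PiE {..<M} (\<lambda>_. A))"
    using inj_combinator[of M "{..<M}" "\<lambda>_. A"] by simp
  have fin: "finite (PiE {..<M} (\<lambda>_. A))" using assms by (simp add: finite_PiE)
  have "EE A q (Suc M) f = (\<Sum>(y,g)\<in>A \<times> PiE {..<M} (\<lambda>_. A). (\<Prod>k<Suc M. q ((g(M:=y)) k)) * f (g(M:=y)))"
    unfolding EE_def PI by (subst sum.reindex[OF inj]) (simp add: case_prod_unfold)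
  also have "\<dots> = (\<Sum>y\<in>A. \<Sum>g\<in>PiE {..<M} (\<lambda>_. A). (\<Prod>k<Suc M. q ((g(M:=y)) k)) * f (g(M:=y)))"
    by (subst sum.cartesian_product) simp
  also have "\<dots> = (\<Sum>g\<in>PiE {..<M} (\<lambda>_. A). \<Sum>y\<in>A. (\<Prod>k<Suc M. q ((g(M:=y)) k)) * f (g(M:=y)))"
    by (rule sum.swap)
  also have "\<dots> = (\<Sum>g\<in>PiE {..<M} (\<lambda>_. A). (\<Prod>k<M. q (g k)) * (\<Sum>y\<in>A. q y * f (g(M:=y))))"
  proof (rule sum.cong[OF refl])
    fix g assume "g \<in> PiE {..<M} (\<lambda>_. A)"
    have "\<And>y. (\<Prod>k<Suc M. q ((g(M:=y)) k)) = q y * (\<Prod>k<M. q (g k))"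
      by (simp add: lessThan_Suc prod.insert)
    thus "(\<Sum>y\<in>A. (\<Prod>k<Suc M. q ((g(M:=y)) k)) * f (g(M:=y))) = (\<Prod>k<M. q (g k)) * (\<Sum>y\<in>A. q y * f (g(M:=y)))"
      by (simp add: sum_distrib_left mult_ac)
  qed
  finally show ?thesis by (simp add: EE_def)
qed

lemma EE_add: "EE A q M (\<lambda>S. f S + g S) = EE A q M f + EE A q M g"
  by (simp add: EE_def distrib_left sum.distrib)

lemma EE_cmult: "EE A q M (\<lambda>S. c * f S) = c * EE A q M f"
  by (simp add: EE_def sum_distrib_left mult_ac)

lemma EE_sum: "EE A q M (\<lambda>S. \<Sum>i\<in>I. f i S) = (\<Sum>i\<in>I. EE A q M (f i))"
  by (simp add: EE_def sum_distrib_left) (rule sum.swap)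

lemma EE_mono_PiE:
  assumes "\<And>x. x \<in> A \<Longrightarrow> q x \<ge> 0" "\<And>S. S \<in> PiE {..<M} (\<lambda>_. A) \<Longrightarrow> f S \<le> g S"
  shows "EE A q M f \<le> EE A q M g"
  unfolding EE_def
proof (rule sum_mono)
  fix S assume S: "S \<in> PiE {..<M} (\<lambda>_. A)"
  have "(\<Prod>k<M. q (S k)) \<ge> 0" using S assms(1) by (intro prod_nonneg) auto
  thus "(\<Prod>k<M. q (S k)) * f S \<le> (\<Prod>k<M. q (S k)) * g S"
    using assms(2)[OF S] by (rule mult_left_mono[rotated])
qed

lemma EE_mono:
  assumes "\<And>x. x \<in> A \<Longrightarrow> q x \<ge> 0" "\<And>S. f S \<le> g S"
  shows "EE A q M f \<le> EE A q M g"
  using EE_mono_PiE[of A q M f g] assms by blast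

lemma EE_one:
  assumes "finite A" "sum q A = 1"
  shows "EE A q M (\<lambda>_. 1) = 1"
proof -
  have "EE A q M (\<lambda>_. 1) = (\<Sum>S\<in>PiE {..<M} (\<lambda>_. A). \<Prod>k<M. q (S k))"
    by (simp add: EE_def)
  also have "\<dots> = (\<Prod>k<M. \<Sum>x\<in>A. q x)"
    using prod_sum_PiE[of "{..<M}" "\<lambda>_. A" "\<lambda>_ x. q x"] assms by simp
  finally show ?thesis using assms by simp
qed

lemma EE_const:
  assumes "finite A" "sum q A = 1"
  shows "EE A q M (\<lambda>_. c) = c"
  using EE_cmult[of A q M c "\<lambda>_. 1"] EE_one[OF assms] by simp

lemma EE_nonneg:
  assumes "\<And>x. x \<in> A \<Longrightarrow> q x \<ge> 0" "\<And>S. S \<in> PiE {..<M} (\<lambda>_. A) \<Longrightarrow> f S \<ge> 0"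
  shows "EE A q M f \<ge> 0"
  using EE_mono_PiE[of A q M "\<lambda>_. 0" f] assms by (simp add: EE_def)

definition A3 :: "'a set \<Rightarrow> ('a \<times> 'a \<times> real) set" where
  "A3 \<Omega> = \<Omega> \<times> \<Omega> \<times> {1, -1}"

definition q3 :: "('a \<Rightarrow> real) \<Rightarrow> ('a \<times> 'a \<times> real) \<Rightarrow> real" where
  "q3 p c = p (fst c) * p (fst (snd c)) / 2"

lemma finite_A3: "finite \<Omega> \<Longrightarrow> finite (A3 \<Omega>)"
  by (simp add: A3_def)

lemma sum_A3:
  assumes "finite \<Omega>"
  shows "(\<Sum>c\<in>A3 \<Omega>. q3 p c * F c) =
         (\<Sum>x\<in>\<Omega>. \<Sum>x'\<in>\<Omega>. p x * p x' / 2 * (F (x,x',1) + F (x,x',-1)))"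
proof -
  have C: "sum G (X \<times> Y) = (\<Sum>x\<in>X. \<Sum>y\<in>Y. G (x,y))" for G :: "_ \<Rightarrow> real" and X Y
    by (subst sum.cartesian_product) (simp add: case_prod_eta)
  have "(\<Sum>c\<in>A3 \<Omega>. q3 p c * F c) = (\<Sum>x\<in>\<Omega>. \<Sum>x'\<in>\<Omega>. \<Sum>e\<in>{1,-1::real}. q3 p (x, x', e) * F (x, x', e))"
    unfolding A3_def by (simp add: C)
  also have "\<dots> = (\<Sum>x\<in>\<Omega>. \<Sum>x'\<in>\<Omega>. p x * p x' / 2 * (F (x,x',1) + F (x,x',-1)))"
    by (simp add: q3_def algebra_simps)
  finally show ?thesis .
qed

lemma q3_nonneg: "(\<And>x. x \<in> \<Omega> \<Longrightarrow> p x \<ge> 0) \<Longrightarrow> c \<in> A3 \<Omega> \<Longrightarrow> q3 p c \<ge> 0"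
  by (auto simp: q3_def A3_def)

lemma sum_q3:
  assumes "finite \<Omega>" "sum p \<Omega> = 1"
  shows "sum (q3 p) (A3 \<Omega>) = 1"
proof -
  have "sum (q3 p) (A3 \<Omega>) = (\<Sum>c\<in>A3 \<Omega>. q3 p c * 1)" by simp
  also have "\<dots> = (\<Sum>x\<in>\<Omega>. \<Sum>x'\<in>\<Omega>. p x * p x')"
    by (subst sum_A3[OF assms(1)]) simp
  also have "\<dots> = 1" using assms by (simp add: sum_distrib_left[symmetric] sum_distrib_right[symmetric])
  finally show ?thesis .
qed

lemma jensen_exp:
  fixes p y :: "'i \<Rightarrow> real"
  assumes "finite I" "\<And>i. i \<in> I \<Longrightarrow> p i \<ge> 0" "sum p I = 1"
  shows "exp (\<Sum>i\<in>I. p i * y i) \<le> (\<Sum>i\<in>I. p i * exp (y i))"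
proof -
  define m where "m = (\<Sum>i\<in>I. p i * y i)"
  have "\<And>i. exp m * (1 + (y i - m)) \<le> exp (y i)"
  proof -
    fix i
    have "1 + (y i - m) \<le> exp (y i - m)" by (rule exp_ge_add_one_self)
    hence "exp m * (1 + (y i - m)) \<le> exp m * exp (y i - m)" by simp
    thus "exp m * (1 + (y i - m)) \<le> exp (y i)" by (simp add: exp_diff)
  qed
  hence "(\<Sum>i\<in>I. p i * (exp m * (1 + (y i - m)))) \<le> (\<Sum>i\<in>I. p i * exp (y i))"
    using assms(2) by (intro sum_mono mult_left_mono) auto
  moreover have "(\<Sum>i\<in>I. p i * (exp m * (1 + (y i - m)))) = exp m * (\<Sum>i\<in>I. p i + p i * y i - m * p i)"
    by (simp add: sum_distrib_left algebra_simps)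
  moreover have "(\<Sum>i\<in>I. p i + p i * y i - m * p i) = sum p I + m - m * sum p I"
    by (simp add: sum.distrib sum_subtractf sum_distrib_left m_def)
  ultimately show ?thesis using assms(3) by (simp add: m_def)
qed

lemma Max_sum_le:
  fixes g :: "'w \<Rightarrow> 'i \<Rightarrow> real"
  assumes "finite W" "W \<noteq> {}" "\<And>i. i \<in> I \<Longrightarrow> p i \<ge> 0"
  shows "Max ((\<lambda>w. \<Sum>i\<in>I. p i * g w i) ` W) \<le> (\<Sum>i\<in>I. p i * Max ((\<lambda>w. g w i) ` W))"
  using assms by (subst Max_le_iff) (auto intro!: sum_mono mult_left_mono Max_ge)

lemma Max_image_cong:
  "(\<And>w. w \<in> W \<Longrightarrow> f w = g w) \<Longrightarrow> Max (f ` W) = Max (g ` W)"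
  by (metis image_cong)

lemma one_coord_sym:
  fixes l :: "'w \<Rightarrow> 'a \<Rightarrow> real"
  assumes fin: "finite \<Omega>" and pnn: "\<And>x. x \<in> \<Omega> \<Longrightarrow> p x \<ge> 0" and p1: "sum p \<Omega> = 1"
    and W: "finite W" "W \<noteq> {}" and mu: "\<mu> \<ge> 0"
  shows "(\<Sum>x\<in>\<Omega>. p x * exp (\<mu> * Max ((\<lambda>w. b w + ((\<Sum>y\<in>\<Omega>. p y * l w y) - l w x)) ` W)))
     \<le> (\<Sum>c\<in>A3 \<Omega>. q3 p c * exp (\<mu> * Max ((\<lambda>w. b w + snd (snd c) * (l w (fst (snd c)) - l w (fst c))) ` W)))"
proof -
  define E where "E x y = exp (\<mu> * Max ((\<lambda>w. b w + (l w y - l w x)) ` W))" for x y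
  have step: "exp (\<mu> * Max ((\<lambda>w. b w + ((\<Sum>y\<in>\<Omega>. p y * l w y) - l w x)) ` W)) \<le> (\<Sum>y\<in>\<Omega>. p y * E x y)"
    if x: "x \<in> \<Omega>" for x
  proof -
    have eq: "b w + ((\<Sum>y\<in>\<Omega>. p y * l w y) - l w x) = (\<Sum>y\<in>\<Omega>. p y * (b w + (l w y - l w x)))" for w
    proof -
      have "(\<Sum>y\<in>\<Omega>. p y * (b w + (l w y - l w x))) = sum p \<Omega> * b w + (\<Sum>y\<in>\<Omega>. p y * l w y) - sum p \<Omega> * l w x"
        by (simp add: algebra_simps sum.distrib sum_subtractf sum_distrib_left sum_distrib_right)
      thus ?thesis using p1 by simp
    qed
    have "Max ((\<lambda>w. b w + ((\<Sum>y\<in>\<Omega>. p y * l w y) - l w x)) ` W)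
        = Max ((\<lambda>w. \<Sum>y\<in>\<Omega>. p y * (b w + (l w y - l w x))) ` W)"
      using eq by simp
    also have "\<dots> \<le> (\<Sum>y\<in>\<Omega>. p y * Max ((\<lambda>w. b w + (l w y - l w x)) ` W))"
      by (rule Max_sum_le[OF W pnn])
    finally have "\<mu> * Max ((\<lambda>w. b w + ((\<Sum>y\<in>\<Omega>. p y * l w y) - l w x)) ` W)
        \<le> \<mu> * (\<Sum>y\<in>\<Omega>. p y * Max ((\<lambda>w. b w + (l w y - l w x)) ` W))"
      by (rule mult_left_mono[OF _ mu])
    also have "\<dots> = (\<Sum>y\<in>\<Omega>. p y * (\<mu> * Max ((\<lambda>w. b w + (l w y - l w x)) ` W)))"
      by (simp add: sum_distrib_left mult_ac)
    finally have "exp (\<mu> * Max ((\<lambda>w. b w + ((\<Sum>y\<in>\<Omega>. p y * l w y) - l w x)) ` W))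
        \<le> exp (\<Sum>y\<in>\<Omega>. p y * (\<mu> * Max ((\<lambda>w. b w + (l w y - l w x)) ` W)))"
      by simp
    also have "\<dots> \<le> (\<Sum>y\<in>\<Omega>. p y * E x y)"
      unfolding E_def by (rule jensen_exp[OF fin pnn p1])
    finally show ?thesis .
  qed
  have "(\<Sum>x\<in>\<Omega>. p x * exp (\<mu> * Max ((\<lambda>w. b w + ((\<Sum>y\<in>\<Omega>. p y * l w y) - l w x)) ` W)))
      \<le> (\<Sum>x\<in>\<Omega>. p x * (\<Sum>y\<in>\<Omega>. p y * E x y))"
    using step pnn by (intro sum_mono mult_left_mono) auto
  also have "\<dots> = (\<Sum>x\<in>\<Omega>. \<Sum>y\<in>\<Omega>. p x * p y * E x y)"
    by (simp add: sum_distrib_left mult_ac)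
  also have "\<dots> = (\<Sum>x\<in>\<Omega>. \<Sum>y\<in>\<Omega>. p x * p y / 2 * (E x y + E y x))"
  proof -
    have "(\<Sum>x\<in>\<Omega>. \<Sum>y\<in>\<Omega>. p x * p y * E y x) = (\<Sum>x\<in>\<Omega>. \<Sum>y\<in>\<Omega>. p x * p y * E x y)"
      by (subst sum.swap) (simp add: mult_ac)
    thus ?thesis by (simp add: algebra_simps sum.distrib sum_divide_distrib[symmetric])
  qed
  also have "\<dots> = (\<Sum>c\<in>A3 \<Omega>. q3 p c * exp (\<mu> * Max ((\<lambda>w. b w + snd (snd c) * (l w (fst (snd c)) - l w (fst c))) ` W)))"
  proof -
    have "E y x = exp (\<mu> * Max ((\<lambda>w. b w + - 1 * (l w y - l w x)) ` W))" for x y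
      unfolding E_def by (simp add: algebra_simps)
    thus ?thesis by (subst sum_A3[OF fin]) (simp add: E_def)
  qed
  finally show ?thesis .
qed

lemma sum_upd_Suc: "(\<Sum>k<Suc M. h ((S(M:=x)) k)) = (\<Sum>k<M. h (S k)) + h x"
  by (simp add: lessThan_Suc add.commute)

lemma symmetrization:
  fixes l :: "'w \<Rightarrow> 'a \<Rightarrow> real"
  assumes fin: "finite \<Omega>" and pnn: "\<And>x. x \<in> \<Omega> \<Longrightarrow> p x \<ge> 0" and p1: "sum p \<Omega> = 1"
    and W: "finite W" "W \<noteq> {}" and mu: "\<mu> \<ge> 0"
  shows "EE \<Omega> p M (\<lambda>S. exp (\<mu> * Max ((\<lambda>w. a w + (\<Sum>k<M. (\<Sum>y\<in>\<Omega>. p y * l w y) - l w (S k))) ` W)))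
     \<le> EE (A3 \<Omega>) (q3 p) M (\<lambda>T. exp (\<mu> * Max ((\<lambda>w. a w + (\<Sum>k<M. snd (snd (T k)) * (l w (fst (snd (T k))) - l w (fst (T k))))) ` W)))"
proof (induction M arbitrary: a)
  case 0
  then show ?case by (simp add: EE_0)
next
  case (Suc M)
  define El where "El w = (\<Sum>y\<in>\<Omega>. p y * l w y)" for w
  define R where "R T w = (\<Sum>k<M. snd (snd (T k)) * (l w (fst (snd (T k))) - l w (fst (T k))))" for T w
  have "EE \<Omega> p (Suc M) (\<lambda>S. exp (\<mu> * Max ((\<lambda>w. a w + (\<Sum>k<Suc M. El w - l w (S k))) ` W)))
     = EE \<Omega> p M (\<lambda>S. \<Sum>x\<in>\<Omega>. p x * exp (\<mu> * Max ((\<lambda>w. (a w + (El w - l w x)) + (\<Sum>k<M. El w - l w (S k))) ` W)))"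
    by (simp add: EE_Suc[OF fin] sum_upd_Suc[where h="\<lambda>y. El _ - l _ y"] algebra_simps)
  also have "\<dots> = (\<Sum>x\<in>\<Omega>. p x * EE \<Omega> p M (\<lambda>S. exp (\<mu> * Max ((\<lambda>w. (a w + (El w - l w x)) + (\<Sum>k<M. El w - l w (S k))) ` W))))"
    by (simp add: EE_sum EE_cmult)
  also have "\<dots> \<le> (\<Sum>x\<in>\<Omega>. p x * EE (A3 \<Omega>) (q3 p) M (\<lambda>T. exp (\<mu> * Max ((\<lambda>w. (a w + (El w - l w x)) + R T w) ` W))))"
    using Suc.IH pnn unfolding El_def R_def by (intro sum_mono mult_left_mono) auto
  also have "\<dots> = EE (A3 \<Omega>) (q3 p) M (\<lambda>T. \<Sum>x\<in>\<Omega>. p x * exp (\<mu> * Max ((\<lambda>w. (a w + R T w) + (El w - l w x)) ` W)))"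
    by (simp add: EE_sum EE_cmult algebra_simps)
  also have "\<dots> \<le> EE (A3 \<Omega>) (q3 p) M (\<lambda>T. \<Sum>c\<in>A3 \<Omega>. q3 p c * exp (\<mu> * Max ((\<lambda>w. (a w + R T w) + snd (snd c) * (l w (fst (snd c)) - l w (fst c))) ` W)))"
    unfolding El_def
  proof (rule EE_mono)
    show "\<And>c. c \<in> A3 \<Omega> \<Longrightarrow> 0 \<le> q3 p c" by (rule q3_nonneg[OF pnn])
  qed (rule one_coord_sym[OF fin pnn p1 W mu])
  also have "\<dots> = EE (A3 \<Omega>) (q3 p) (Suc M) (\<lambda>T. exp (\<mu> * Max ((\<lambda>w. a w + (\<Sum>k<Suc M. snd (snd (T k)) * (l w (fst (snd (T k))) - l w (fst (T k))))) ` W)))"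
    by (simp add: EE_Suc[OF finite_A3[OF fin]] sum_upd_Suc[where h="\<lambda>c. snd (snd c) * (l _ (fst (snd c)) - l _ (fst c))"] R_def algebra_simps)
  finally show ?case unfolding El_def .
qed

lemma exp_major_core:
  fixes X Y P Q :: real
  assumes "Y \<le> X" "Q \<le> P" "P \<le> X" "P + Q \<le> X + Y"
  shows "exp P + exp Q \<le> exp X + exp Y"
proof (cases "Q \<le> Y")
  case True
  thus ?thesis using assms by (simp add: add_mono)
next
  case False
  define d where "d = X - P"
  have d0: "d \<ge> 0" using assms by (simp add: d_def)
  have "Q \<le> Y + d" using assms by (simp add: d_def)
  hence "exp Q \<le> exp (Y + d)" by simp
  moreover have "exp X + exp Y - exp (X - d) - exp (Y + d) = (exp d - 1) * (exp (X - d) - exp Y)"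
    by (simp add: exp_diff exp_add field_simps)
  moreover have "(exp d - 1) * (exp (X - d) - exp Y) \<ge> 0"
    using d0 False assms by (intro mult_nonneg_nonneg) (auto simp: d_def)
  moreover have "exp (X - d) = exp P" by (simp add: d_def)
  ultimately show ?thesis by linarith
qed

lemma exp_major:
  fixes X Y P Q :: real
  assumes "P \<le> max X Y" "Q \<le> max X Y" "P + Q \<le> X + Y"
  shows "exp P + exp Q \<le> exp X + exp Y"
proof -
  have "exp P + exp Q \<le> exp (max X Y) + exp (min X Y)"
  proof (cases "Q \<le> P")
    case True
    thus ?thesis using assms by (intro exp_major_core) (auto simp: max_def min_def)
  next
    case False
    thus ?thesis using assms exp_major_core[of "min X Y" "max X Y" P Q] by (auto simp: max_def min_def)
  qed
  thus ?thesis by (cases "X \<le> Y") (auto simp: max_def min_def)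
qed

lemma two_point:
  fixes b u s :: "'w \<Rightarrow> real"
  assumes W: "finite W" "W \<noteq> {}" and mu: "\<mu> \<ge> 0"
    and us: "\<And>w. w \<in> W \<Longrightarrow> \<bar>u w\<bar> \<le> \<bar>s w\<bar>"
    and uss: "\<And>w w'. w \<in> W \<Longrightarrow> w' \<in> W \<Longrightarrow> \<bar>u w - u w'\<bar> \<le> \<bar>s w - s w'\<bar>"
  shows "exp (\<mu> * Max ((\<lambda>w. b w + u w) ` W)) + exp (\<mu> * Max ((\<lambda>w. b w - u w) ` W))
       \<le> exp (\<mu> * Max ((\<lambda>w. b w + s w) ` W)) + exp (\<mu> * Max ((\<lambda>w. b w - s w) ` W))"
proof -
  have "Max ((\<lambda>w. b w + u w) ` W) \<in> (\<lambda>w. b w + u w) ` W" using W by (intro Max_in) auto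
  then obtain w1 where w1: "w1 \<in> W" "Max ((\<lambda>w. b w + u w) ` W) = b w1 + u w1" by auto
  have "Max ((\<lambda>w. b w - u w) ` W) \<in> (\<lambda>w. b w - u w) ` W" using W by (intro Max_in) auto
  then obtain w2 where w2: "w2 \<in> W" "Max ((\<lambda>w. b w - u w) ` W) = b w2 - u w2" by auto
  define X where "X = Max ((\<lambda>w. b w + s w) ` W)"
  define Y where "Y = Max ((\<lambda>w. b w - s w) ` W)"
  have X: "\<And>w. w \<in> W \<Longrightarrow> b w + s w \<le> X" unfolding X_def using W by (intro Max_ge) auto
  have Y: "\<And>w. w \<in> W \<Longrightarrow> b w - s w \<le> Y" unfolding Y_def using W by (intro Max_ge) auto
  have P: "b w1 + u w1 \<le> max X Y"
    using X[OF w1(1)] Y[OF w1(1)] us[OF w1(1)] by (auto simp: abs_if max_def split: if_splits)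
  have Q: "b w2 - u w2 \<le> max X Y"
    using X[OF w2(1)] Y[OF w2(1)] us[OF w2(1)] by (auto simp: abs_if max_def split: if_splits)
  have PQ: "(b w1 + u w1) + (b w2 - u w2) \<le> X + Y"
    using X[OF w1(1)] Y[OF w1(1)] X[OF w2(1)] Y[OF w2(1)] uss[OF w1(1) w2(1)]
    by (auto simp: abs_if split: if_splits)
  have "exp (\<mu> * (b w1 + u w1)) + exp (\<mu> * (b w2 - u w2)) \<le> exp (\<mu> * X) + exp (\<mu> * Y)"
  proof (rule exp_major)
    show "\<mu> * (b w1 + u w1) \<le> max (\<mu> * X) (\<mu> * Y)"
      using mult_left_mono[OF P mu] mu by (simp add: max_mult_distrib_left)
    show "\<mu> * (b w2 - u w2) \<le> max (\<mu> * X) (\<mu> * Y)"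
      using mult_left_mono[OF Q mu] mu by (simp add: max_mult_distrib_left)
    show "\<mu> * (b w1 + u w1) + \<mu> * (b w2 - u w2) \<le> \<mu> * X + \<mu> * Y"
      using mult_left_mono[OF PQ mu] by (simp add: distrib_left)
  qed
  thus ?thesis using w1 w2 by (simp add: X_def Y_def)
qed

lemma one_coord_contr:
  fixes s :: "'w \<Rightarrow> 'a \<Rightarrow> 'a \<Rightarrow> real" and \<phi> :: "real \<Rightarrow> real"
  assumes fin: "finite \<Omega>" and pnn: "\<And>x. x \<in> \<Omega> \<Longrightarrow> p x \<ge> 0"
    and W: "finite W" "W \<noteq> {}" and mu: "\<mu> \<ge> 0"
    and lip: "\<And>x y. \<bar>\<phi> x - \<phi> y\<bar> \<le> \<bar>x - y\<bar>" and phi0: "\<phi> 0 = 0"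
  shows "(\<Sum>c\<in>A3 \<Omega>. q3 p c * exp (\<mu> * Max ((\<lambda>w. b w + snd (snd c) * \<phi> (s w (fst c) (fst (snd c)))) ` W)))
       \<le> (\<Sum>c\<in>A3 \<Omega>. q3 p c * exp (\<mu> * Max ((\<lambda>w. b w + snd (snd c) * s w (fst c) (fst (snd c))) ` W)))"
proof -
  have "exp (\<mu> * Max ((\<lambda>w. b w + \<phi> (s w x x')) ` W)) + exp (\<mu> * Max ((\<lambda>w. b w - \<phi> (s w x x')) ` W))
      \<le> exp (\<mu> * Max ((\<lambda>w. b w + s w x x') ` W)) + exp (\<mu> * Max ((\<lambda>w. b w - s w x x') ` W))" for x x'
  proof (rule two_point[OF W mu])
    show "\<bar>\<phi> (s w x x')\<bar> \<le> \<bar>s w x x'\<bar>" for w using lip[of "s w x x'" 0] phi0 by simp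
    show "\<bar>\<phi> (s w x x') - \<phi> (s w' x x')\<bar> \<le> \<bar>s w x x' - s w' x x'\<bar>" for w w' by (rule lip)
  qed
  hence "(\<Sum>x\<in>\<Omega>. \<Sum>x'\<in>\<Omega>. p x * p x' / 2 * (exp (\<mu> * Max ((\<lambda>w. b w + 1 * \<phi> (s w x x')) ` W)) + exp (\<mu> * Max ((\<lambda>w. b w + - 1 * \<phi> (s w x x')) ` W))))
      \<le> (\<Sum>x\<in>\<Omega>. \<Sum>x'\<in>\<Omega>. p x * p x' / 2 * (exp (\<mu> * Max ((\<lambda>w. b w + 1 * s w x x') ` W)) + exp (\<mu> * Max ((\<lambda>w. b w + - 1 * s w x x') ` W))))"
    using pnn by (intro sum_mono mult_left_mono) auto
  thus ?thesis by (simp add: sum_A3[OF fin])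
qed

lemma contraction:
  fixes s :: "'w \<Rightarrow> 'a \<Rightarrow> 'a \<Rightarrow> real" and \<phi> :: "real \<Rightarrow> real"
  assumes fin: "finite \<Omega>" and pnn: "\<And>x. x \<in> \<Omega> \<Longrightarrow> p x \<ge> 0"
    and W: "finite W" "W \<noteq> {}" and mu: "\<mu> \<ge> 0"
    and lip: "\<And>x y. \<bar>\<phi> x - \<phi> y\<bar> \<le> \<bar>x - y\<bar>" and phi0: "\<phi> 0 = 0"
  shows "EE (A3 \<Omega>) (q3 p) M (\<lambda>T. exp (\<mu> * Max ((\<lambda>w. a w + (\<Sum>k<M. snd (snd (T k)) * \<phi> (s w (fst (T k)) (fst (snd (T k)))))) ` W)))
       \<le> EE (A3 \<Omega>) (q3 p) M (\<lambda>T. exp (\<mu> * Max ((\<lambda>w. a w + (\<Sum>k<M. snd (snd (T k)) * s w (fst (T k)) (fst (snd (T k))))) ` W)))"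
proof (induction M arbitrary: a)
  case 0
  then show ?case by (simp add: EE_0)
next
  case (Suc M)
  define Rp where "Rp T w = (\<Sum>k<M. snd (snd (T k)) * \<phi> (s w (fst (T k)) (fst (snd (T k)))))" for T w
  define Rs where "Rs T w = (\<Sum>k<M. snd (snd (T k)) * s w (fst (T k)) (fst (snd (T k))))" for T w
  have q3nn: "\<And>c. c \<in> A3 \<Omega> \<Longrightarrow> 0 \<le> q3 p c" by (rule q3_nonneg[OF pnn])
  have "EE (A3 \<Omega>) (q3 p) (Suc M) (\<lambda>T. exp (\<mu> * Max ((\<lambda>w. a w + (\<Sum>k<Suc M. snd (snd (T k)) * \<phi> (s w (fst (T k)) (fst (snd (T k)))))) ` W)))
     = EE (A3 \<Omega>) (q3 p) M (\<lambda>T. \<Sum>c\<in>A3 \<Omega>. q3 p c * exp (\<mu> * Max ((\<lambda>w. (a w + Rp T w) + snd (snd c) * \<phi> (s w (fst c) (fst (snd c)))) ` W)))"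
    by (simp add: EE_Suc[OF finite_A3[OF fin]] sum_upd_Suc[where h="\<lambda>c. snd (snd c) * \<phi> (s _ (fst c) (fst (snd c)))"] Rp_def algebra_simps)
  also have "\<dots> \<le> EE (A3 \<Omega>) (q3 p) M (\<lambda>T. \<Sum>c\<in>A3 \<Omega>. q3 p c * exp (\<mu> * Max ((\<lambda>w. (a w + Rp T w) + snd (snd c) * s w (fst c) (fst (snd c))) ` W)))"
    by (rule EE_mono[OF q3nn], assumption, rule one_coord_contr[OF fin pnn W mu lip phi0])
  also have "\<dots> = (\<Sum>c\<in>A3 \<Omega>. q3 p c * EE (A3 \<Omega>) (q3 p) M (\<lambda>T. exp (\<mu> * Max ((\<lambda>w. (a w + snd (snd c) * s w (fst c) (fst (snd c))) + Rp T w) ` W))))"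
    by (simp add: EE_sum EE_cmult algebra_simps)
  also have "\<dots> \<le> (\<Sum>c\<in>A3 \<Omega>. q3 p c * EE (A3 \<Omega>) (q3 p) M (\<lambda>T. exp (\<mu> * Max ((\<lambda>w. (a w + snd (snd c) * s w (fst c) (fst (snd c))) + Rs T w) ` W))))"
    using Suc.IH q3nn unfolding Rp_def Rs_def by (intro sum_mono mult_left_mono) auto
  also have "\<dots> = EE (A3 \<Omega>) (q3 p) M (\<lambda>T. \<Sum>c\<in>A3 \<Omega>. q3 p c * exp (\<mu> * Max ((\<lambda>w. (a w + Rs T w) + snd (snd c) * s w (fst c) (fst (snd c))) ` W)))"
    by (simp add: EE_sum EE_cmult algebra_simps)
  also have "\<dots> = EE (A3 \<Omega>) (q3 p) (Suc M) (\<lambda>T. exp (\<mu> * Max ((\<lambda>w. a w + (\<Sum>k<Suc M. snd (snd (T k)) * s w (fst (T k)) (fst (snd (T k))))) ` W)))"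
    by (simp add: EE_Suc[OF finite_A3[OF fin]] sum_upd_Suc[where h="\<lambda>c. snd (snd c) * s _ (fst c) (fst (snd c))"] Rs_def algebra_simps)
  finally show ?case .
qed

lemma cosh_le:
  fixes t :: real
  shows "(exp t + exp (- t)) / 2 \<le> exp (t\<^sup>2 / 2)"
proof -
  define h where "h = 2 * \<bar>t\<bar>"
  have H: "- h * (1/2) + ln (1 + (1/2) * (exp h - 1)) \<le> h\<^sup>2 / 8"
    using Hoeffdings_lemma_aux[of h "1/2"] by (simp add: h_def)
  have "(1 + exp h) / 2 = 1 + (1/2) * (exp h - 1)" by (simp add: field_simps)
  hence E: "ln ((1 + exp h) / 2) = ln (1 + (1/2) * (exp h - 1))" by (rule arg_cong)
  have "h\<^sup>2 / 8 + h * (1/2) = \<bar>t\<bar> + t\<^sup>2 / 2"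
    by (simp add: h_def power2_eq_square algebra_simps abs_mult_self_eq)
  hence "ln ((1 + exp h) / 2) \<le> \<bar>t\<bar> + t\<^sup>2 / 2"
    using H E by linarith
  hence "exp (ln ((1 + exp h) / 2)) \<le> exp (\<bar>t\<bar> + t\<^sup>2 / 2)"
    by simp
  moreover have "exp (ln ((1 + exp h) / 2)) = (1 + exp h) / 2"
    by (intro exp_ln) (simp add: add_pos_pos)
  ultimately have "(1 + exp h) / 2 \<le> exp (\<bar>t\<bar> + t\<^sup>2 / 2)"
    by simp
  hence "exp (- \<bar>t\<bar>) * ((1 + exp h) / 2) \<le> exp (- \<bar>t\<bar>) * exp (\<bar>t\<bar> + t\<^sup>2 / 2)"
    by simp
  moreover have "exp (- \<bar>t\<bar>) * ((1 + exp h) / 2) = (exp \<bar>t\<bar> + exp (- \<bar>t\<bar>)) / 2"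
    by (simp add: h_def field_simps flip: exp_add)
  moreover have "exp (- \<bar>t\<bar>) * exp (\<bar>t\<bar> + t\<^sup>2 / 2) = exp (t\<^sup>2 / 2)"
    by (simp flip: exp_add)
  moreover have "(exp \<bar>t\<bar> + exp (- \<bar>t\<bar>)) = exp t + exp (- t)"
    by (cases "t \<ge> 0") auto
  ultimately show ?thesis by simp
qed

lemma rademacher_exp:
  fixes b0 :: "'a \<Rightarrow> 'a \<Rightarrow> real"
  assumes fin: "finite \<Omega>" and pnn: "\<And>x. x \<in> \<Omega> \<Longrightarrow> p x \<ge> 0" and p1: "sum p \<Omega> = 1"
    and bnd: "\<And>x x'. x \<in> \<Omega> \<Longrightarrow> x' \<in> \<Omega> \<Longrightarrow> \<bar>b0 x x'\<bar> \<le> 1"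
  shows "EE (A3 \<Omega>) (q3 p) M (\<lambda>T. exp (\<beta> * (\<Sum>k<M. snd (snd (T k)) * b0 (fst (T k)) (fst (snd (T k))))))
     \<le> exp (real M * \<beta>\<^sup>2 / 2)"
proof (induction M)
  case 0
  then show ?case by (simp add: EE_0)
next
  case (Suc M)
  define R where "R T = (\<Sum>k<M. snd (snd (T k)) * b0 (fst (T k)) (fst (snd (T k))))" for T
  define I where "I = (\<Sum>c\<in>A3 \<Omega>. q3 p c * exp (\<beta> * (snd (snd c) * b0 (fst c) (fst (snd c)))))"
  have q3nn: "\<And>c. c \<in> A3 \<Omega> \<Longrightarrow> 0 \<le> q3 p c" by (rule q3_nonneg[OF pnn])
  have I: "I \<le> exp (\<beta>\<^sup>2 / 2)"
  proof -
    have "I = (\<Sum>x\<in>\<Omega>. \<Sum>x'\<in>\<Omega>. p x * p x' * ((exp (\<beta> * b0 x x') + exp (- (\<beta> * b0 x x'))) / 2))"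
      unfolding I_def by (subst sum_A3[OF fin]) (simp add: algebra_simps add_divide_distrib)
    also have "\<dots> \<le> (\<Sum>x\<in>\<Omega>. \<Sum>x'\<in>\<Omega>. p x * p x' * exp (\<beta>\<^sup>2 / 2))"
    proof (intro sum_mono mult_left_mono)
      fix x x' assume x: "x \<in> \<Omega>" and x': "x' \<in> \<Omega>"
      show "0 \<le> p x * p x'" using pnn x x' by simp
      have "(\<beta> * b0 x x')\<^sup>2 \<le> \<beta>\<^sup>2"
      proof -
        have "(b0 x x')\<^sup>2 \<le> 1" using bnd[OF x x'] by (simp add: abs_le_square_iff[of _ 1, simplified])
        hence "\<beta>\<^sup>2 * (b0 x x')\<^sup>2 \<le> \<beta>\<^sup>2 * 1" by (intro mult_left_mono) auto
        thus ?thesis by (simp add: power_mult_distrib)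
      qed
      hence "exp ((\<beta> * b0 x x')\<^sup>2 / 2) \<le> exp (\<beta>\<^sup>2 / 2)" by simp
      thus "(exp (\<beta> * b0 x x') + exp (- (\<beta> * b0 x x'))) / 2 \<le> exp (\<beta>\<^sup>2 / 2)"
        using cosh_le[of "\<beta> * b0 x x'"] by linarith
    qed
    also have "\<dots> = exp (\<beta>\<^sup>2 / 2)"
      using p1 by (simp add: sum_distrib_right[symmetric] sum_distrib_left[symmetric])
    finally show ?thesis .
  qed
  have "EE (A3 \<Omega>) (q3 p) (Suc M) (\<lambda>T. exp (\<beta> * (\<Sum>k<Suc M. snd (snd (T k)) * b0 (fst (T k)) (fst (snd (T k))))))
      = EE (A3 \<Omega>) (q3 p) M (\<lambda>T. exp (\<beta> * R T) * I)"
    by (simp add: EE_Suc[OF finite_A3[OF fin]] sum_upd_Suc[where h="\<lambda>c. snd (snd c) * b0 (fst c) (fst (snd c))"]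
        R_def I_def distrib_left exp_add sum_distrib_left mult_ac)
  also have "\<dots> \<le> EE (A3 \<Omega>) (q3 p) M (\<lambda>T. exp (\<beta>\<^sup>2 / 2) * exp (\<beta> * R T))"
    by (rule EE_mono[OF q3nn], assumption) (use I in \<open>simp add: mult.commute\<close>)
  also have "\<dots> = exp (\<beta>\<^sup>2 / 2) * EE (A3 \<Omega>) (q3 p) M (\<lambda>T. exp (\<beta> * R T))"
    by (rule EE_cmult)
  also have "\<dots> \<le> exp (\<beta>\<^sup>2 / 2) * exp (real M * \<beta>\<^sup>2 / 2)"
    using Suc.IH unfolding R_def by simp
  also have "\<dots> = exp (real (Suc M) * \<beta>\<^sup>2 / 2)"
    by (simp add: exp_add[symmetric] algebra_simps add_divide_distrib)
  finally show ?case .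
qed

lemma linear_class:
  fixes wv :: "'w \<Rightarrow> 'i \<Rightarrow> real" and ph :: "'i \<Rightarrow> 'a \<Rightarrow> 'a \<Rightarrow> real"
  assumes fin: "finite \<Omega>" and pnn: "\<And>x. x \<in> \<Omega> \<Longrightarrow> p x \<ge> 0" and p1: "sum p \<Omega> = 1"
    and W: "finite W" "W \<noteq> {}" and N: "finite N" "N \<noteq> {}" and R: "R \<ge> 0" and mu: "\<mu> \<ge> 0"
    and l1: "\<And>w. w \<in> W \<Longrightarrow> (\<Sum>i\<in>N. \<bar>wv w i\<bar>) \<le> R"
    and bnd: "\<And>i x x'. i \<in> N \<Longrightarrow> x \<in> \<Omega> \<Longrightarrow> x' \<in> \<Omega> \<Longrightarrow> \<bar>ph i x x'\<bar> \<le> 1"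
  shows "EE (A3 \<Omega>) (q3 p) M (\<lambda>T. exp (\<mu> * Max ((\<lambda>w. \<Sum>k<M. snd (snd (T k)) * (\<Sum>i\<in>N. wv w i * ph i (fst (T k)) (fst (snd (T k))))) ` W)))
     \<le> 2 * real (card N) * exp (real M * (\<mu> * R)\<^sup>2 / 2)"
proof -
  define B where "B T i = (\<Sum>k<M. snd (snd (T k)) * ph i (fst (T k)) (fst (snd (T k))))" for T i
  define Bn where "Bn T i = (\<Sum>k<M. snd (snd (T k)) * (- ph i (fst (T k)) (fst (snd (T k)))))" for T i
  have q3nn: "\<And>c. c \<in> A3 \<Omega> \<Longrightarrow> 0 \<le> q3 p c" by (rule q3_nonneg[OF pnn])
  have pw: "exp (\<mu> * Max ((\<lambda>w. \<Sum>k<M. snd (snd (T k)) * (\<Sum>i\<in>N. wv w i * ph i (fst (T k)) (fst (snd (T k))))) ` W))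
      \<le> (\<Sum>i\<in>N. exp ((\<mu> * R) * B T i) + exp ((\<mu> * R) * Bn T i))" for T
  proof -
    define Bm where "Bm = Max ((\<lambda>i. \<bar>B T i\<bar>) ` N)"
    have Bge: "\<And>i. i \<in> N \<Longrightarrow> \<bar>B T i\<bar> \<le> Bm" unfolding Bm_def using N by (intro Max_ge) auto
    have "Bm \<in> (\<lambda>i. \<bar>B T i\<bar>) ` N" unfolding Bm_def using N by (intro Max_in) auto
    then obtain i0 where i0: "i0 \<in> N" "Bm = \<bar>B T i0\<bar>" by auto
    have Bm0: "Bm \<ge> 0" using i0 by simp
    have bound: "(\<Sum>k<M. snd (snd (T k)) * (\<Sum>i\<in>N. wv w i * ph i (fst (T k)) (fst (snd (T k))))) \<le> R * Bm"
      if w: "w \<in> W" for w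
    proof -
      have "(\<Sum>k<M. snd (snd (T k)) * (\<Sum>i\<in>N. wv w i * ph i (fst (T k)) (fst (snd (T k)))))
           = (\<Sum>i\<in>N. wv w i * B T i)"
        unfolding B_def by (simp add: sum_distrib_left mult_ac) (rule sum.swap)
      also have "\<dots> \<le> (\<Sum>i\<in>N. \<bar>wv w i\<bar> * Bm)"
      proof (rule sum_mono)
        fix i assume i: "i \<in> N"
        have "wv w i * B T i \<le> \<bar>wv w i\<bar> * \<bar>B T i\<bar>" by (simp add: abs_mult[symmetric])
        also have "\<dots> \<le> \<bar>wv w i\<bar> * Bm" using Bge[OF i] by (intro mult_left_mono) auto
        finally show "wv w i * B T i \<le> \<bar>wv w i\<bar> * Bm" .
      qed
      also have "\<dots> = (\<Sum>i\<in>N. \<bar>wv w i\<bar>) * Bm" by (simp add: sum_distrib_right)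
      also have "\<dots> \<le> R * Bm" using l1[OF w] Bm0 by (intro mult_right_mono) auto
      finally show ?thesis .
    qed
    have "Max ((\<lambda>w. \<Sum>k<M. snd (snd (T k)) * (\<Sum>i\<in>N. wv w i * ph i (fst (T k)) (fst (snd (T k))))) ` W) \<le> R * Bm"
      using W bound by (subst Max_le_iff) auto
    hence "exp (\<mu> * Max ((\<lambda>w. \<Sum>k<M. snd (snd (T k)) * (\<Sum>i\<in>N. wv w i * ph i (fst (T k)) (fst (snd (T k))))) ` W))
        \<le> exp ((\<mu> * R) * \<bar>B T i0\<bar>)"
      using mult_left_mono[OF _ mu] i0 by (simp add: mult.assoc)
    also have "\<dots> \<le> exp ((\<mu> * R) * B T i0) + exp ((\<mu> * R) * Bn T i0)"
    proof -
      have "Bn T i0 = - B T i0" unfolding Bn_def B_def by (simp add: sum_negf)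
      thus ?thesis by (cases "B T i0 \<ge> 0") (auto simp: add_pos_nonneg add_nonneg_pos)
    qed
    also have "\<dots> \<le> (\<Sum>i\<in>N. exp ((\<mu> * R) * B T i) + exp ((\<mu> * R) * Bn T i))"
      using i0 N by (intro member_le_sum) (auto intro: add_nonneg_nonneg)
    finally show ?thesis .
  qed
  have "EE (A3 \<Omega>) (q3 p) M (\<lambda>T. exp (\<mu> * Max ((\<lambda>w. \<Sum>k<M. snd (snd (T k)) * (\<Sum>i\<in>N. wv w i * ph i (fst (T k)) (fst (snd (T k))))) ` W)))
     \<le> EE (A3 \<Omega>) (q3 p) M (\<lambda>T. \<Sum>i\<in>N. exp ((\<mu> * R) * B T i) + exp ((\<mu> * R) * Bn T i))"
    by (rule EE_mono[OF q3nn pw])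
  also have "\<dots> = (\<Sum>i\<in>N. EE (A3 \<Omega>) (q3 p) M (\<lambda>T. exp ((\<mu> * R) * B T i)) + EE (A3 \<Omega>) (q3 p) M (\<lambda>T. exp ((\<mu> * R) * Bn T i)))"
    by (simp add: EE_sum EE_add)
  also have "\<dots> \<le> (\<Sum>i\<in>N. exp (real M * (\<mu> * R)\<^sup>2 / 2) + exp (real M * (\<mu> * R)\<^sup>2 / 2))"
  proof (rule sum_mono, rule add_mono)
    fix i assume i: "i \<in> N"
    show "EE (A3 \<Omega>) (q3 p) M (\<lambda>T. exp ((\<mu> * R) * B T i)) \<le> exp (real M * (\<mu> * R)\<^sup>2 / 2)"
      unfolding B_def by (rule rademacher_exp[OF fin pnn p1]) (use bnd i in auto)
    show "EE (A3 \<Omega>) (q3 p) M (\<lambda>T. exp ((\<mu> * R) * Bn T i)) \<le> exp (real M * (\<mu> * R)\<^sup>2 / 2)"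
      unfolding Bn_def by (rule rademacher_exp[OF fin pnn p1]) (use bnd i in auto)
  qed
  also have "\<dots> = 2 * real (card N) * exp (real M * (\<mu> * R)\<^sup>2 / 2)" by simp
  finally show ?thesis .
qed

lemma EE_divide: "EE A q M (\<lambda>S. f S / c) = EE A q M f / c"
  by (simp add: EE_def sum_divide_distrib)

lemma exp_amgm: fixes m a b :: real shows "exp (m * (a + b)) \<le> (exp (2 * m * a) + exp (2 * m * b)) / 2"
proof -
  have "0 \<le> (exp (m * a) - exp (m * b))\<^sup>2" by (rule zero_le_power2)
  hence "2 * (exp (m * a) * exp (m * b)) \<le> (exp (m * a))\<^sup>2 + (exp (m * b))\<^sup>2"
    by (simp add: power2_eq_square algebra_simps)
  moreover have "(exp (m * a))\<^sup>2 = exp (2 * m * a)" "(exp (m * b))\<^sup>2 = exp (2 * m * b)"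
    by (simp_all add: power2_eq_square flip: exp_add)
  moreover have "exp (m * a) * exp (m * b) = exp (m * (a + b))" by (simp add: distrib_left exp_add)
  ultimately show ?thesis by simp
qed

lemma Max_add_le:
  fixes f g :: "'w \<Rightarrow> real"
  assumes "finite W" "W \<noteq> {}"
  shows "Max ((\<lambda>w. f w + g w) ` W) \<le> Max (f ` W) + Max (g ` W)"
  using assms by (subst Max_le_iff) (auto intro!: add_mono Max_ge)

lemma deviation:
  fixes wv :: "'w \<Rightarrow> 'i \<Rightarrow> real" and ph :: "'i \<Rightarrow> 'a \<Rightarrow> real" and \<phi> :: "real \<Rightarrow> real"
  assumes fin: "finite \<Omega>" and pnn: "\<And>x. x \<in> \<Omega> \<Longrightarrow> p x \<ge> 0" and p1: "sum p \<Omega> = 1"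
    and W: "finite W" "W \<noteq> {}" and N: "finite N" "N \<noteq> {}" and R: "R \<ge> 0" and mu: "\<mu> \<ge> 0"
    and l1: "\<And>w. w \<in> W \<Longrightarrow> (\<Sum>i\<in>N. \<bar>wv w i\<bar>) \<le> R"
    and bnd: "\<And>i x. i \<in> N \<Longrightarrow> x \<in> \<Omega> \<Longrightarrow> \<bar>ph i x\<bar> \<le> 1"
    and lip: "\<And>x y. \<bar>\<phi> x - \<phi> y\<bar> \<le> \<bar>x - y\<bar>" and phi0: "\<phi> 0 = 0"
    and om: "\<And>S. S \<in> PiE {..<M} (\<lambda>_. \<Omega>) \<Longrightarrow> \<omega> S \<in> W"
  shows "EE \<Omega> p M (\<lambda>S. exp (\<mu> * (\<Sum>k<M. (\<Sum>y\<in>\<Omega>. p y * \<phi> (\<Sum>i\<in>N. wv (\<omega> S) i * ph i y))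
                                          - \<phi> (\<Sum>i\<in>N. wv (\<omega> S) i * ph i (S k)))))
      \<le> 2 * real (card N) * exp (2 * real M * \<mu>\<^sup>2 * R\<^sup>2)"
proof -
  define l where "l w x = \<phi> (\<Sum>i\<in>N. wv w i * ph i x)" for w x
  define s1 where "s1 w x x' = (\<Sum>i\<in>N. wv w i * ph i x')" for w and x x' :: 'a
  define s2 where "s2 w x x' = (\<Sum>i\<in>N. wv w i * ph i x)" for w and x x' :: 'a
  define K where "K = 2 * real (card N) * exp (real M * (2 * \<mu> * R)\<^sup>2 / 2)"
  have q3nn: "\<And>c. c \<in> A3 \<Omega> \<Longrightarrow> 0 \<le> q3 p c" by (rule q3_nonneg[OF pnn])
  have mu2: "2 * \<mu> \<ge> 0" using mu by simp
  have "EE \<Omega> p M (\<lambda>S. exp (\<mu> * (\<Sum>k<M. (\<Sum>y\<in>\<Omega>. p y * l (\<omega> S) y) - l (\<omega> S) (S k))))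
     \<le> EE \<Omega> p M (\<lambda>S. exp (\<mu> * Max ((\<lambda>w. 0 + (\<Sum>k<M. (\<Sum>y\<in>\<Omega>. p y * l w y) - l w (S k))) ` W)))"
  proof (rule EE_mono_PiE[OF pnn])
    fix S assume S: "S \<in> PiE {..<M} (\<lambda>_. \<Omega>)"
    have "(\<Sum>k<M. (\<Sum>y\<in>\<Omega>. p y * l (\<omega> S) y) - l (\<omega> S) (S k))
        \<le> Max ((\<lambda>w. 0 + (\<Sum>k<M. (\<Sum>y\<in>\<Omega>. p y * l w y) - l w (S k))) ` W)"
      using om[OF S] W by (intro Max_ge) auto
    thus "exp (\<mu> * (\<Sum>k<M. (\<Sum>y\<in>\<Omega>. p y * l (\<omega> S) y) - l (\<omega> S) (S k)))
        \<le> exp (\<mu> * Max ((\<lambda>w. 0 + (\<Sum>k<M. (\<Sum>y\<in>\<Omega>. p y * l w y) - l w (S k))) ` W))"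
      using mult_left_mono[OF _ mu] by simp
  qed (simp)
  also have "\<dots> \<le> EE (A3 \<Omega>) (q3 p) M (\<lambda>T. exp (\<mu> * Max ((\<lambda>w. 0 + (\<Sum>k<M. snd (snd (T k)) * (l w (fst (snd (T k))) - l w (fst (T k))))) ` W)))"
    by (rule symmetrization[OF fin pnn p1 W mu])
  also have "\<dots> \<le> EE (A3 \<Omega>) (q3 p) M (\<lambda>T.
        (exp (2 * \<mu> * Max ((\<lambda>w. 0 + (\<Sum>k<M. snd (snd (T k)) * \<phi> (s1 w (fst (T k)) (fst (snd (T k)))))) ` W))
       + exp (2 * \<mu> * Max ((\<lambda>w. 0 + (\<Sum>k<M. snd (snd (T k)) * (\<lambda>t. - \<phi> t) (s2 w (fst (T k)) (fst (snd (T k)))))) ` W))) / 2)"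
  proof (rule EE_mono[OF q3nn], assumption)
    fix T :: "nat \<Rightarrow> 'a \<times> 'a \<times> real"
    define A where "A w = (\<Sum>k<M. snd (snd (T k)) * \<phi> (s1 w (fst (T k)) (fst (snd (T k)))))" for w
    define B where "B w = (\<Sum>k<M. snd (snd (T k)) * (\<lambda>t. - \<phi> t) (s2 w (fst (T k)) (fst (snd (T k)))))" for w
    have eq: "0 + (\<Sum>k<M. snd (snd (T k)) * (l w (fst (snd (T k))) - l w (fst (T k)))) = A w + B w" for w
      unfolding A_def B_def l_def s1_def s2_def by (simp add: sum.distrib[symmetric] algebra_simps)
    have "\<mu> * Max ((\<lambda>w. 0 + (\<Sum>k<M. snd (snd (T k)) * (l w (fst (snd (T k))) - l w (fst (T k))))) ` W)
        \<le> \<mu> * (Max (A ` W) + Max (B ` W))"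
      unfolding eq by (rule mult_left_mono[OF Max_add_le[OF W] mu])
    hence "exp (\<mu> * Max ((\<lambda>w. 0 + (\<Sum>k<M. snd (snd (T k)) * (l w (fst (snd (T k))) - l w (fst (T k))))) ` W))
        \<le> exp (\<mu> * (Max (A ` W) + Max (B ` W)))" by simp
    also have "\<dots> \<le> (exp (2 * \<mu> * Max (A ` W)) + exp (2 * \<mu> * Max (B ` W))) / 2"
      by (rule exp_amgm)
    finally show "exp (\<mu> * Max ((\<lambda>w. 0 + (\<Sum>k<M. snd (snd (T k)) * (l w (fst (snd (T k))) - l w (fst (T k))))) ` W))
      \<le> (exp (2 * \<mu> * Max ((\<lambda>w. 0 + (\<Sum>k<M. snd (snd (T k)) * \<phi> (s1 w (fst (T k)) (fst (snd (T k)))))) ` W))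
       + exp (2 * \<mu> * Max ((\<lambda>w. 0 + (\<Sum>k<M. snd (snd (T k)) * (\<lambda>t. - \<phi> t) (s2 w (fst (T k)) (fst (snd (T k)))))) ` W))) / 2"
      unfolding A_def B_def by simp
  qed
  also have "\<dots> = (EE (A3 \<Omega>) (q3 p) M (\<lambda>T. exp (2 * \<mu> * Max ((\<lambda>w. 0 + (\<Sum>k<M. snd (snd (T k)) * \<phi> (s1 w (fst (T k)) (fst (snd (T k)))))) ` W)))
       + EE (A3 \<Omega>) (q3 p) M (\<lambda>T. exp (2 * \<mu> * Max ((\<lambda>w. 0 + (\<Sum>k<M. snd (snd (T k)) * (\<lambda>t. - \<phi> t) (s2 w (fst (T k)) (fst (snd (T k)))))) ` W)))) / 2"
    by (simp only: EE_divide EE_add)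
  also have "\<dots> \<le> (K + K) / 2"
  proof (intro divide_right_mono add_mono)
    have "EE (A3 \<Omega>) (q3 p) M (\<lambda>T. exp (2 * \<mu> * Max ((\<lambda>w. 0 + (\<Sum>k<M. snd (snd (T k)) * \<phi> (s1 w (fst (T k)) (fst (snd (T k)))))) ` W)))
       \<le> EE (A3 \<Omega>) (q3 p) M (\<lambda>T. exp (2 * \<mu> * Max ((\<lambda>w. 0 + (\<Sum>k<M. snd (snd (T k)) * s1 w (fst (T k)) (fst (snd (T k))))) ` W)))"
      by (rule contraction[OF fin pnn W mu2 lip phi0])
    also have "\<dots> \<le> K"
      using linear_class[OF fin pnn p1 W N R mu2 l1, where ph="\<lambda>i x x'. ph i x'" and M=M] bnd
      unfolding K_def s1_def by simp
    finally show "EE (A3 \<Omega>) (q3 p) M (\<lambda>T. exp (2 * \<mu> * Max ((\<lambda>w. 0 + (\<Sum>k<M. snd (snd (T k)) * \<phi> (s1 w (fst (T k)) (fst (snd (T k)))))) ` W))) \<le> K" .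
    have phi0': "(\<lambda>t. - \<phi> t) 0 = 0" using phi0 by simp
    have lip': "\<And>x y. \<bar>(\<lambda>t. - \<phi> t) x - (\<lambda>t. - \<phi> t) y\<bar> \<le> \<bar>x - y\<bar>" using lip by (simp add: abs_minus_commute)
    have "EE (A3 \<Omega>) (q3 p) M (\<lambda>T. exp (2 * \<mu> * Max ((\<lambda>w. 0 + (\<Sum>k<M. snd (snd (T k)) * (\<lambda>t. - \<phi> t) (s2 w (fst (T k)) (fst (snd (T k)))))) ` W)))
       \<le> EE (A3 \<Omega>) (q3 p) M (\<lambda>T. exp (2 * \<mu> * Max ((\<lambda>w. 0 + (\<Sum>k<M. snd (snd (T k)) * s2 w (fst (T k)) (fst (snd (T k))))) ` W)))"
      by (rule contraction[OF fin pnn W mu2 lip' phi0'])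
    also have "\<dots> \<le> K"
      using linear_class[OF fin pnn p1 W N R mu2 l1, where ph="\<lambda>i x x'. ph i x" and M=M] bnd
      unfolding K_def s2_def by simp
    finally show "EE (A3 \<Omega>) (q3 p) M (\<lambda>T. exp (2 * \<mu> * Max ((\<lambda>w. 0 + (\<Sum>k<M. snd (snd (T k)) * (\<lambda>t. - \<phi> t) (s2 w (fst (T k)) (fst (snd (T k)))))) ` W))) \<le> K" .
  qed simp
  also have "\<dots> = 2 * real (card N) * exp (2 * real M * \<mu>\<^sup>2 * R\<^sup>2)"
    by (simp add: K_def power_mult_distrib)
  finally show ?thesis unfolding l_def .
qed

definition lg :: "real \<Rightarrow> real" where "lg t = ln (1 + exp (- t))"

definition DKL :: "real \<Rightarrow> real \<Rightarrow> real" where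
  "DKL a F = sigmoid a * (lg F - lg a) + sigmoid (- a) * (lg (- F) - lg (- a))"

lemma sig_pos: "0 < sigmoid t"
  by (simp add: sigmoid_def add_pos_pos)

lemma sig_lt1: "sigmoid t < 1"
proof -
  have "1 < 1 + exp (- t)" "0 < 1 + exp (- t)" by (simp_all add: add_pos_pos)
  thus ?thesis by (simp add: sigmoid_def divide_less_eq)
qed

lemma sig_neg: "sigmoid (- t) = 1 - sigmoid t"
proof -
  have "1 + exp (- t) > 0" "1 + exp t > 0" by (auto intro: add_pos_pos)
  thus ?thesis by (simp add: sigmoid_def field_simps exp_minus)
qed

lemma lg_sig: "lg t = - ln (sigmoid t)"
proof -
  have "1 + exp (- t) > 0" by (auto intro: add_pos_pos)
  thus ?thesis by (simp add: lg_def sigmoid_def ln_div)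
qed

lemma sig_mono: "a \<le> b \<Longrightarrow> sigmoid a \<le> sigmoid b"
  unfolding sigmoid_def by (rule divide_left_mono) (auto intro!: mult_pos_pos add_pos_pos)

lemma DERIV_sig: "DERIV sigmoid x :> sigmoid x * (1 - sigmoid x)"
proof -
  have p: "1 + exp (- x) \<noteq> 0" by (metis add_pos_pos exp_gt_zero less_irrefl zero_less_one)
  have "DERIV sigmoid x :> exp (- x) / (1 + exp (- x))\<^sup>2"
    unfolding sigmoid_def using p
    by (auto intro!: derivative_eq_intros simp: power2_eq_square field_simps)
  moreover have "exp (- x) / (1 + exp (- x))\<^sup>2 = sigmoid x * (1 - sigmoid x)"
    using p by (simp add: sigmoid_def field_simps power2_eq_square)
  ultimately show ?thesis by simp
qed

lemma DERIV_lg: "DERIV lg x :> - (1 - sigmoid x)"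
proof -
  have p: "1 + exp (- x) \<noteq> 0" by (metis add_pos_pos exp_gt_zero less_irrefl zero_less_one)
  have p2: "1 + exp (- x) > 0" by (auto intro: add_pos_pos)
  have "DERIV lg x :> - exp (- x) / (1 + exp (- x))"
    unfolding lg_def using p2
    by (auto intro!: derivative_eq_intros simp: field_simps)
  moreover have "- exp (- x) / (1 + exp (- x)) = - (1 - sigmoid x)"
    using p by (simp add: sigmoid_def field_simps)
  ultimately show ?thesis by simp
qed

lemma DERIV_lgneg: "DERIV (\<lambda>t. lg (- t)) x :> sigmoid x"
proof -
  have "DERIV (\<lambda>t. lg (- t)) x :> - (1 - sigmoid (- x)) * (- 1)"
    by (rule DERIV_chain2[OF DERIV_lg]) (auto intro!: derivative_eq_intros)
  thus ?thesis by (simp add: sig_neg)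
qed

lemma lip_from_deriv:
  fixes f f' :: "real \<Rightarrow> real"
  assumes d: "\<And>x. DERIV f x :> f' x" and b: "\<And>x. \<bar>f' x\<bar> \<le> L"
  shows "\<bar>f a - f b\<bar> \<le> L * \<bar>a - b\<bar>"
proof -
  have main: "\<bar>f y - f x\<bar> \<le> L * \<bar>y - x\<bar>" if "x < y" for x y
  proof -
    have "\<exists>z. x < z \<and> z < y \<and> f y - f x = (y - x) * f' z" by (rule MVT2[OF that]) (rule d)
    then obtain z where "f y - f x = (y - x) * f' z" by blast
    hence "\<bar>f y - f x\<bar> = \<bar>y - x\<bar> * \<bar>f' z\<bar>" by (simp add: abs_mult)
    also have "\<dots> \<le> \<bar>y - x\<bar> * L" using b by (intro mult_left_mono) auto
    finally show ?thesis by (simp add: mult.commute)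
  qed
  consider "a < b" | "a = b" | "b < a" by linarith
  thus ?thesis
  proof cases
    case 1 thus ?thesis using main[OF 1] by (simp add: abs_minus_commute)
  next
    case 2 thus ?thesis using b[of 0] by simp
  next
    case 3 thus ?thesis using main[OF 3] by simp
  qed
qed

lemma sig_deriv_le: "sigmoid x * (1 - sigmoid x) \<le> 1/4"
proof -
  have "0 \<le> (2 * sigmoid x - 1)\<^sup>2" by (rule zero_le_power2)
  thus ?thesis by (simp add: power2_eq_square algebra_simps)
qed

lemma sig_lip: "\<bar>sigmoid a - sigmoid b\<bar> \<le> \<bar>a - b\<bar> / 4"
proof -
  have "\<bar>sigmoid a - sigmoid b\<bar> \<le> (1/4) * \<bar>a - b\<bar>"
  proof (rule lip_from_deriv[OF DERIV_sig])
    fix x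
    have "0 \<le> sigmoid x * (1 - sigmoid x)" using sig_pos[of x] sig_lt1[of x] by simp
    thus "\<bar>sigmoid x * (1 - sigmoid x)\<bar> \<le> 1/4" using sig_deriv_le[of x] by simp
  qed
  thus ?thesis by simp
qed

lemma lg_lip: "\<bar>(lg a - ln 2) - (lg b - ln 2)\<bar> \<le> \<bar>a - b\<bar>"
proof -
  have "\<bar>lg a - lg b\<bar> \<le> 1 * \<bar>a - b\<bar>"
  proof (rule lip_from_deriv[OF DERIV_lg])
    fix x show "\<bar>- (1 - sigmoid x)\<bar> \<le> 1" using sig_pos[of x] sig_lt1[of x] by simp
  qed
  thus ?thesis by simp
qed

lemma lg0: "lg 0 - ln 2 = 0"
  by (simp add: lg_def)

lemma pinsker: "2 * (sigmoid a - sigmoid F)\<^sup>2 \<le> DKL a F"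
proof -
  define h where "h F = DKL a F - 2 * ((sigmoid a - sigmoid F) * (sigmoid a - sigmoid F))" for F
  define h' where "h' F = (sigmoid F - sigmoid a) * (1 - 4 * (sigmoid F * (1 - sigmoid F)))" for F
  have dh: "DERIV h x :> h' x" for x
  proof -
    have d0: "DERIV (\<lambda>F. sigmoid a * (lg F - lg a) + sigmoid (- a) * (lg (- F) - lg (- a))) x :> sigmoid a * (- (1 - sigmoid x) - 0) + sigmoid (- a) * (sigmoid x - 0)"
      by (intro DERIV_add DERIV_cmult DERIV_diff DERIV_lg DERIV_lgneg DERIV_const)
    have d1: "DERIV (\<lambda>F. DKL a F) x :> sigmoid a * (- (1 - sigmoid x)) + sigmoid (- a) * sigmoid x"
      using d0 unfolding DKL_def by simp
    have d1': "DERIV (\<lambda>F. DKL a F) x :> sigmoid x - sigmoid a"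
      using d1 by (simp add: sig_neg algebra_simps)
    have d2: "DERIV (\<lambda>F. (sigmoid a - sigmoid F) * (sigmoid a - sigmoid F)) x :>
              (0 - sigmoid x * (1 - sigmoid x)) * (sigmoid a - sigmoid x) + (0 - sigmoid x * (1 - sigmoid x)) * (sigmoid a - sigmoid x)"
      by (intro DERIV_mult DERIV_diff DERIV_const DERIV_sig)
    have "DERIV h x :> (sigmoid x - sigmoid a) - 2 * ((0 - sigmoid x * (1 - sigmoid x)) * (sigmoid a - sigmoid x) + (0 - sigmoid x * (1 - sigmoid x)) * (sigmoid a - sigmoid x))"
      unfolding h_def by (intro DERIV_diff d1' DERIV_cmult d2)
    thus ?thesis by (simp add: h'_def algebra_simps)
  qed
  have ha: "h a = 0" by (simp add: h_def DKL_def)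
  have "h F \<ge> 0"
  proof -
    consider "a < F" | "a = F" | "F < a" by linarith
    thus ?thesis
    proof cases
      case 1
      have "\<exists>z. a < z \<and> z < F \<and> h F - h a = (F - a) * h' z" by (rule MVT2[OF 1]) (rule dh)
      then obtain z where z: "a < z" "z < F" "h F - h a = (F - a) * h' z" by blast
      have "sigmoid z - sigmoid a \<ge> 0" using sig_mono[of a z] z by simp
      moreover have "1 - 4 * (sigmoid z * (1 - sigmoid z)) \<ge> 0" using sig_deriv_le[of z] by simp
      ultimately have "h' z \<ge> 0" by (simp add: h'_def)
      thus ?thesis using z ha 1 by simp
    next
      case 2 thus ?thesis using ha by simp
    next
      case 3
      have "\<exists>z. F < z \<and> z < a \<and> h a - h F = (a - F) * h' z" by (rule MVT2[OF 3]) (rule dh)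
      then obtain z where z: "F < z" "z < a" "h a - h F = (a - F) * h' z" by blast
      have "sigmoid z - sigmoid a \<le> 0" using sig_mono[of z a] z by simp
      moreover have "1 - 4 * (sigmoid z * (1 - sigmoid z)) \<ge> 0" using sig_deriv_le[of z] by simp
      ultimately have "h' z \<le> 0" by (simp add: h'_def mult_nonpos_nonneg)
      hence "(a - F) * h' z \<le> 0" using 3 by (simp add: mult_nonneg_nonpos)
      thus ?thesis using z ha by simp
    qed
  qed
  thus ?thesis by (simp add: h_def power2_eq_square)
qed

lemma DKL_upper: "DKL a F \<le> (sigmoid a - sigmoid F)\<^sup>2 / (sigmoid F * (1 - sigmoid F))"
proof -
  define p where "p = sigmoid a"
  define q where "q = sigmoid F"
  have p: "0 < p" "p < 1" using sig_pos sig_lt1 by (auto simp: p_def)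
  have q: "0 < q" "q < 1" using sig_pos sig_lt1 by (auto simp: q_def)
  have "DKL a F = p * (ln p - ln q) + (1 - p) * (ln (1 - p) - ln (1 - q))"
    by (simp add: DKL_def lg_sig sig_neg p_def q_def)
  also have "\<dots> \<le> p * ((p - q) / q) + (1 - p) * (((1 - p) - (1 - q)) / (1 - q))"
    using p q by (intro add_mono mult_left_mono ln_diff_le) auto
  also have "\<dots> = (p - q)\<^sup>2 / (q * (1 - q))"
    using p q by (simp add: field_simps power2_eq_square)
  finally show ?thesis by (simp add: p_def q_def)
qed

lemma sig_var_inv: "1 / (sigmoid F * (1 - sigmoid F)) = 2 + exp F + exp (- F)"
proof -
  have p: "1 + exp (- F) > 0" by (auto intro: add_pos_pos)
  have "sigmoid F * (1 - sigmoid F) = exp (- F) / (1 + exp (- F))\<^sup>2"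
    using p by (simp add: sigmoid_def field_simps power2_eq_square)
  hence "1 / (sigmoid F * (1 - sigmoid F)) = (1 + exp (- F))\<^sup>2 / exp (- F)" by simp
  also have "\<dots> = 2 + exp F + exp (- F)"
    by (simp add: power2_eq_square field_simps exp_minus)
  finally show ?thesis .
qed

definition ext0 :: "nat \<Rightarrow> (nat \<Rightarrow> real) \<Rightarrow> (nat \<Rightarrow> real)" where
  "ext0 n f = (\<lambda>i. if i < n then f i else 0)"

lemma bij_ext0: "bij_betw (ext0 n) (PiE {..<n} (\<lambda>_. {1, -1})) (cube n)"
proof (rule bij_betwI[where g = "\<lambda>y. restrict y {..<n}"])
  show "ext0 n \<in> PiE {..<n} (\<lambda>_. {1, -1}) \<rightarrow> cube n"
    by (auto simp: ext0_def cube_def PiE_def Pi_def)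
  show "(\<lambda>y. restrict y {..<n}) \<in> cube n \<rightarrow> PiE {..<n} (\<lambda>_. {1, -1})"
    by (auto simp: cube_def)
  show "restrict (ext0 n f) {..<n} = f" if "f \<in> PiE {..<n} (\<lambda>_. {1, -1})" for f
    using that by (auto simp: ext0_def restrict_def PiE_def extensional_def fun_eq_iff)
  show "ext0 n (restrict y {..<n}) = y" if "y \<in> cube n" for y
    using that by (auto simp: ext0_def cube_def fun_eq_iff)
qed

lemma finite_cube: "finite (cube n)"
  using bij_betw_finite[OF bij_ext0[of n]] by (simp add: finite_PiE)

lemma cube_nonempty: "(\<lambda>i. if i < n then 1 else 0) \<in> cube n"
  by (simp add: cube_def)

lemma cube_val: "x \<in> cube n \<Longrightarrow> i < n \<Longrightarrow> x i = 1 \<or> x i = -1"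
  by (simp add: cube_def)

lemma cube_out: "x \<in> cube n \<Longrightarrow> \<not> i < n \<Longrightarrow> x i = 0"
  by (simp add: cube_def)

lemma cube_upd: "x \<in> cube n \<Longrightarrow> u < n \<Longrightarrow> (v = 1 \<or> v = -1) \<Longrightarrow> x(u := v) \<in> cube n"
  by (auto simp: cube_def)

lemma cube_sq: "x \<in> cube n \<Longrightarrow> i < n \<Longrightarrow> x i * x i = 1"
  using cube_val by fastforce

lemma chi_abs: "x \<in> cube n \<Longrightarrow> T \<subseteq> {..<n} \<Longrightarrow> \<bar>chi T x\<bar> = 1"
proof -
  assume x: "x \<in> cube n" and T: "T \<subseteq> {..<n}"
  have "\<bar>chi T x\<bar> = (\<Prod>i\<in>T. \<bar>x i\<bar>)" by (simp add: chi_def abs_prod)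
  also have "\<dots> = 1" using x T cube_val[OF x] by (intro prod.neutral) fastforce
  finally show ?thesis .
qed

lemma chi_upd_notin: "u \<notin> T \<Longrightarrow> chi T (x(u := v)) = chi T x"
  unfolding chi_def by (intro prod.cong) auto

lemma chi_upd_in:
  assumes "finite T" "u \<in> T"
  shows "chi T (x(u := v)) = v * chi (T - {u}) x"
proof -
  have "chi T (x(u := v)) = (x(u:=v)) u * chi (T - {u}) (x(u := v))"
    unfolding chi_def using assms by (simp add: prod.remove)
  also have "chi (T - {u}) (x(u := v)) = chi (T - {u}) x" by (rule chi_upd_notin) simp
  finally show ?thesis by (metis fun_upd_same)
qed

lemma sum_cube_prod:
  fixes G :: "nat \<Rightarrow> real \<Rightarrow> real"
  shows "(\<Sum>y\<in>cube m. \<Prod>j<m. G j (y j)) = (\<Prod>j<m. G j 1 + G j (-1))"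
proof -
  have "(\<Sum>y\<in>cube m. \<Prod>j<m. G j (y j)) = (\<Sum>f\<in>PiE {..<m} (\<lambda>_. {1, -1}). \<Prod>j<m. G j (ext0 m f j))"
    by (rule sum.reindex_bij_betw[OF bij_ext0, symmetric])
  also have "\<dots> = (\<Sum>f\<in>PiE {..<m} (\<lambda>_. {1, -1}). \<Prod>j<m. G j (f j))"
    by (intro sum.cong prod.cong) (auto simp: ext0_def)
  also have "\<dots> = (\<Prod>j<m. \<Sum>v\<in>{1, -1}. G j v)"
    by (rule prod_sum_PiE[symmetric]) auto
  finally show ?thesis by simp
qed

lemma weight_exp: "rbm_weight n m J h g x = exp (rbm_f n m J h g x)"
proof -
  define c where "c j = (\<Sum>i<n. J i j * x i) + g j" for j
  have "rbm_weight n m J h g x = (\<Sum>y\<in>cube m. exp (\<Sum>i<n. h i * x i) * (\<Prod>j<m. exp (y j * c j)))"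
    unfolding rbm_weight_def
  proof (rule sum.cong[OF refl])
    fix y assume y: "y \<in> cube m"
    have "(\<Sum>i<n. \<Sum>j<m. x i * J i j * y j) + (\<Sum>i<n. h i * x i) + (\<Sum>j<m. g j * y j)
        = (\<Sum>i<n. h i * x i) + (\<Sum>j<m. y j * c j)"
    proof -
      have "(\<Sum>i<n. \<Sum>j<m. x i * J i j * y j) = (\<Sum>j<m. y j * (\<Sum>i<n. J i j * x i))"
        by (subst sum.swap) (simp add: sum_distrib_left mult_ac)
      moreover have "(\<Sum>j<m. y j * c j) = (\<Sum>j<m. y j * (\<Sum>i<n. J i j * x i)) + (\<Sum>j<m. g j * y j)"
        unfolding c_def by (simp add: distrib_left sum.distrib mult_ac)
      ultimately show ?thesis by simp
    qed
    hence "exp ((\<Sum>i<n. \<Sum>j<m. x i * J i j * y j) + (\<Sum>i<n. h i * x i) + (\<Sum>j<m. g j * y j))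
        = exp (\<Sum>i<n. h i * x i) * exp (\<Sum>j<m. y j * c j)"
      by (simp only: exp_add)
    also have "exp (\<Sum>j<m. y j * c j) = (\<Prod>j<m. exp (y j * c j))" by (rule exp_sum) simp
    finally show "exp ((\<Sum>i<n. \<Sum>j<m. x i * J i j * y j) + (\<Sum>i<n. h i * x i) + (\<Sum>j<m. g j * y j))
        = exp (\<Sum>i<n. h i * x i) * (\<Prod>j<m. exp (y j * c j))" .
  qed
  also have "\<dots> = exp (\<Sum>i<n. h i * x i) * (\<Prod>j<m. exp (c j) + exp (- c j))"
    using sum_cube_prod[of "\<lambda>j v. exp (v * c j)" m] by (simp add: sum_distrib_left[symmetric])
  also have "(\<Prod>j<m. exp (c j) + exp (- c j)) = (\<Prod>j<m. exp (rho (c j)))"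
  proof (rule prod.cong[OF refl])
    fix j
    have "exp (c j) + exp (- c j) > 0" by (simp add: add_pos_pos)
    thus "exp (c j) + exp (- c j) = exp (rho (c j))" by (simp add: rho_def)
  qed
  also have "\<dots> = exp (\<Sum>j<m. rho (c j))" by (simp add: exp_sum)
  finally show ?thesis by (simp add: rbm_f_def c_def exp_add[symmetric] add.commute)
qed

definition Zp :: "nat \<Rightarrow> nat \<Rightarrow> (nat \<Rightarrow> nat \<Rightarrow> real) \<Rightarrow> (nat \<Rightarrow> real) \<Rightarrow> (nat \<Rightarrow> real) \<Rightarrow> real" where
  "Zp n m J h g = (\<Sum>x'\<in>cube n. rbm_weight n m J h g x')"

lemma Zp_pos: "Zp n m J h g > 0"
proof -
  have "0 < rbm_weight n m J h g (\<lambda>i. if i < n then 1 else 0)" by (simp add: weight_exp)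
  also have "\<dots> \<le> Zp n m J h g"
    unfolding Zp_def by (rule member_le_sum[OF cube_nonempty]) (auto simp: weight_exp finite_cube)
  finally show ?thesis .
qed

lemma marg_eq: "rbm_marginal n m J h g x = exp (rbm_f n m J h g x) / Zp n m J h g"
  by (simp add: rbm_marginal_def Zp_def weight_exp)

lemma marg_pos: "rbm_marginal n m J h g x > 0"
  using Zp_pos[of n m J h g] by (simp add: marg_eq)

lemma marg_sum: "(\<Sum>x\<in>cube n. rbm_marginal n m J h g x) = 1"
proof -
  have "(\<Sum>x\<in>cube n. rbm_marginal n m J h g x) = Zp n m J h g / Zp n m J h g"
    unfolding rbm_marginal_def Zp_def by (simp add: sum_divide_distrib[symmetric])
  thus ?thesis using Zp_pos[of n m J h g] by simp
qed

lemma cond_sig: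
  "cond_prob_one n m J h g u x = sigmoid (rbm_f n m J h g (x(u := 1)) - rbm_f n m J h g (x(u := -1)))"
proof -
  define Z where "Z = Zp n m J h g"
  have Z: "Z > 0" using Zp_pos by (simp add: Z_def)
  define A where "A = rbm_f n m J h g (x(u := 1))"
  define B where "B = rbm_f n m J h g (x(u := -1))"
  have "cond_prob_one n m J h g u x = (exp A / Z) / (exp A / Z + exp B / Z)"
    by (simp only: cond_prob_one_def marg_eq Z_def A_def B_def)
  also have "\<dots> = exp A / (exp A + exp B)" using Z by (simp add: field_simps)
  also have "\<dots> = sigmoid (A - B)"
    by (simp add: sigmoid_def exp_diff field_simps exp_minus)
  finally show ?thesis by (simp add: A_def B_def)
qed

lemma fourier_inversion:
  assumes x: "x \<in> cube n"
  shows "F x = (\<Sum>T\<in>Pow {..<n}. fourier_coeff n F T * chi T x)"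
proof -
  have key: "(\<Sum>T\<in>Pow {..<n}. chi T y * chi T x) = (if y = x then 2 ^ n else 0)" if y: "y \<in> cube n" for y
  proof -
    have "(\<Sum>T\<in>Pow {..<n}. chi T y * chi T x) = (\<Sum>T\<in>Pow {..<n}. (\<Prod>i\<in>T. y i * x i) * (\<Prod>i\<in>{..<n} - T. 1))"
      by (simp add: chi_def prod.distrib)
    also have "\<dots> = (\<Prod>i<n. y i * x i + 1)"
      by (rule prod_add[symmetric]) simp
    also have "\<dots> = (if y = x then 2 ^ n else 0)"
    proof (cases "y = x")
      case True
      have "(\<Prod>i<n. y i * x i + 1) = (\<Prod>i<n. 2)"
        using True cube_sq[OF x] by (intro prod.cong) auto
      thus ?thesis using True by simp
    next
      case False
      then obtain i where i: "y i \<noteq> x i" by auto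
      have "i < n" using i cube_out[OF x] cube_out[OF y] by fastforce
      hence "y i * x i + 1 = 0" using i cube_val[OF x] cube_val[OF y] by fastforce
      hence "(\<Prod>i<n. y i * x i + 1) = 0" using \<open>i < n\<close> by (intro prod_zero) auto
      thus ?thesis using False by simp
    qed
    finally show ?thesis .
  qed
  have "(\<Sum>T\<in>Pow {..<n}. fourier_coeff n F T * chi T x)
      = (\<Sum>T\<in>Pow {..<n}. \<Sum>y\<in>cube n. F y * (chi T y * chi T x) / 2 ^ n)"
    unfolding fourier_coeff_def
    by (intro sum.cong refl) (simp add: sum_divide_distrib sum_distrib_left mult_ac)
  also have "\<dots> = (\<Sum>y\<in>cube n. F y * (\<Sum>T\<in>Pow {..<n}. chi T y * chi T x) / 2 ^ n)"
    by (subst sum.swap) (simp add: sum_distrib_left sum_divide_distrib)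
  also have "\<dots> = (\<Sum>y\<in>cube n. if y = x then F x else 0)"
    by (intro sum.cong refl) (simp add: key)
  also have "\<dots> = F x" using x finite_cube by simp
  finally show ?thesis by simp
qed

definition Tu :: "nat \<Rightarrow> nat \<Rightarrow> nat set set" where
  "Tu n u = {T. T \<subseteq> {..<n} \<and> u \<in> T}"

lemma finite_Tu: "finite (Tu n u)"
  by (rule finite_subset[of _ "Pow {..<n}"]) (auto simp: Tu_def)

lemma logit_fourier:
  assumes u: "u < n" and x: "x \<in> cube n"
  shows "F (x(u := 1)) - F (x(u := -1)) = 2 * (\<Sum>T\<in>Tu n u. fourier_coeff n F T * chi (T - {u}) x)"
proof -
  have x1: "x(u := 1) \<in> cube n" and x2: "x(u := -1) \<in> cube n" using cube_upd[OF x u] by auto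
  have fT: "finite T" if "T \<in> Pow {..<n}" for T using that finite_subset by blast
  have "F (x(u := 1)) - F (x(u := -1)) = (\<Sum>T\<in>Pow {..<n}. fourier_coeff n F T * (chi T (x(u := 1)) - chi T (x(u := -1))))"
    by (simp add: fourier_inversion[OF x1, of F] fourier_inversion[OF x2, of F] sum_subtractf[symmetric] algebra_simps)
  also have "\<dots> = (\<Sum>T\<in>Pow {..<n}. if u \<in> T then 2 * (fourier_coeff n F T * chi (T - {u}) x) else 0)"
    by (intro sum.cong refl) (auto simp: chi_upd_in chi_upd_notin fT)
  also have "\<dots> = (\<Sum>T\<in>{T\<in>Pow {..<n}. u \<in> T}. 2 * (fourier_coeff n F T * chi (T - {u}) x))"
    by (rule sum.inter_filter[symmetric]) simp
  also have "{T\<in>Pow {..<n}. u \<in> T} = Tu n u" by (auto simp: Tu_def)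
  finally show ?thesis by (simp only: sum_distrib_left)
qed

definition Good :: "nat \<Rightarrow> nat \<Rightarrow> nat set \<Rightarrow> nat set set" where
  "Good n u Nb = {T \<in> Tu n u. T - {u} \<subseteq> Nb}"

definition Bad :: "nat \<Rightarrow> nat \<Rightarrow> nat set \<Rightarrow> nat set set" where
  "Bad n u Nb = {T \<in> Tu n u. \<not> T - {u} \<subseteq> Nb}"

lemma Good_img:
  assumes "u < n" "u \<notin> Nb" "Nb \<subseteq> {..<n}"
  shows "insert u ` Pow Nb = Good n u Nb" and "inj_on (insert u) (Pow Nb)"
proof -
  show "insert u ` Pow Nb = Good n u Nb"
  proof
    show "insert u ` Pow Nb \<subseteq> Good n u Nb" using assms by (auto simp: Good_def Tu_def)
    show "Good n u Nb \<subseteq> insert u ` Pow Nb"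
    proof
      fix T assume T: "T \<in> Good n u Nb"
      hence "T = insert u (T - {u})" "T - {u} \<in> Pow Nb" by (auto simp: Good_def Tu_def)
      thus "T \<in> insert u ` Pow Nb" by blast
    qed
  qed
  show "inj_on (insert u) (Pow Nb)"
    using assms(2) by (auto simp: inj_on_def)
qed

definition wt :: "nat \<Rightarrow> ((nat \<Rightarrow> real) \<Rightarrow> real) \<Rightarrow> nat \<Rightarrow> nat set \<Rightarrow> real" where
  "wt n F u T = 2 * fourier_coeff n F (insert u T)"

lemma sum_Good:
  assumes "u < n" "u \<notin> Nb" "Nb \<subseteq> {..<n}"
  shows "(\<Sum>T\<in>Good n u Nb. G T) = (\<Sum>T'\<in>Pow Nb. G (insert u T'))"
  using sum.reindex[OF Good_img(2)[OF assms], of G] Good_img(1)[OF assms] by simp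

lemma Ft_eq:
  assumes "u < n" "u \<notin> Nb" "Nb \<subseteq> {..<n}"
  shows "feat_dot Nb (wt n F u) x = 2 * (\<Sum>T\<in>Good n u Nb. fourier_coeff n F T * chi (T - {u}) x)"
proof -
  have "(\<Sum>T\<in>Good n u Nb. fourier_coeff n F T * chi (T - {u}) x)
      = (\<Sum>T'\<in>Pow Nb. fourier_coeff n F (insert u T') * chi (insert u T' - {u}) x)"
    by (rule sum_Good[OF assms])
  also have "\<dots> = (\<Sum>T'\<in>Pow Nb. fourier_coeff n F (insert u T') * chi T' x)"
    using assms(2) by (intro sum.cong refl) (auto intro!: arg_cong[where f="\<lambda>T. chi T x"])
  finally show ?thesis by (simp add: feat_dot_def wt_def sum_distrib_left mult_ac)
qed

lemma l1_wt:
  assumes "u < n" "u \<notin> Nb" "Nb \<subseteq> {..<n}"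
  shows "l1_norm Nb (wt n F u) \<le> 2 * (\<Sum>T\<in>Tu n u. \<bar>fourier_coeff n F T\<bar>)"
proof -
  have "l1_norm Nb (wt n F u) = 2 * (\<Sum>T\<in>Good n u Nb. \<bar>fourier_coeff n F T\<bar>)"
    by (simp add: l1_norm_def wt_def sum_Good[OF assms] abs_mult sum_distrib_left)
  also have "(\<Sum>T\<in>Good n u Nb. \<bar>fourier_coeff n F T\<bar>) \<le> (\<Sum>T\<in>Tu n u. \<bar>fourier_coeff n F T\<bar>)"
    by (rule sum_mono2[OF finite_Tu]) (auto simp: Good_def)
  finally show ?thesis by simp
qed

lemma approx_bound:
  assumes u: "u < n" "u \<notin> Nb" "Nb \<subseteq> {..<n}" and x: "x \<in> cube n" and z: "\<zeta> > 0"
    and hyp: "\<And>i T. T \<subseteq> {..<n} \<Longrightarrow> u \<in> T \<Longrightarrow> i \<in> T \<Longrightarrow> i \<noteq> u \<Longrightarrow> \<zeta> \<le> \<bar>fourier_coeff n F T\<bar> \<Longrightarrow> i \<in> Nb"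
  shows "\<bar>(F (x(u := 1)) - F (x(u := -1))) - feat_dot Nb (wt n F u) x\<bar>
        \<le> 2 * \<zeta> * real (card {T. T \<subseteq> {..<n} \<and> u \<in> T \<and> fourier_coeff n F T \<noteq> 0})"
proof -
  have disj: "Tu n u = Good n u Nb \<union> Bad n u Nb" "Good n u Nb \<inter> Bad n u Nb = {}"
    by (auto simp: Good_def Bad_def)
  have finB: "finite (Bad n u Nb)" "finite (Good n u Nb)"
    using finite_Tu[of n u] by (auto simp: Good_def Bad_def)
  have "(F (x(u := 1)) - F (x(u := -1))) - feat_dot Nb (wt n F u) x
      = 2 * (\<Sum>T\<in>Bad n u Nb. fourier_coeff n F T * chi (T - {u}) x)"
    unfolding logit_fourier[OF u(1) x] Ft_eq[OF u] disj(1)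
    by (simp add: sum.union_disjoint[OF finB(2) finB(1) disj(2)])
  hence "\<bar>(F (x(u := 1)) - F (x(u := -1))) - feat_dot Nb (wt n F u) x\<bar>
      = 2 * \<bar>\<Sum>T\<in>Bad n u Nb. fourier_coeff n F T * chi (T - {u}) x\<bar>" by simp
  also have "\<bar>\<Sum>T\<in>Bad n u Nb. fourier_coeff n F T * chi (T - {u}) x\<bar> \<le> (\<Sum>T\<in>Bad n u Nb. \<bar>fourier_coeff n F T\<bar>)"
  proof -
    have "\<bar>\<Sum>T\<in>Bad n u Nb. fourier_coeff n F T * chi (T - {u}) x\<bar> \<le> (\<Sum>T\<in>Bad n u Nb. \<bar>fourier_coeff n F T * chi (T - {u}) x\<bar>)"
      by (rule sum_abs)
    also have "\<dots> = (\<Sum>T\<in>Bad n u Nb. \<bar>fourier_coeff n F T\<bar>)"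
    proof (intro sum.cong refl)
      fix T assume "T \<in> Bad n u Nb"
      hence "T - {u} \<subseteq> {..<n}" by (auto simp: Bad_def Tu_def)
      thus "\<bar>fourier_coeff n F T * chi (T - {u}) x\<bar> = \<bar>fourier_coeff n F T\<bar>"
        by (simp add: abs_mult chi_abs[OF x])
    qed
    finally show ?thesis .
  qed
  also have "(\<Sum>T\<in>Bad n u Nb. \<bar>fourier_coeff n F T\<bar>) = (\<Sum>T\<in>{T \<in> Bad n u Nb. fourier_coeff n F T \<noteq> 0}. \<bar>fourier_coeff n F T\<bar>)"
    using finB(1) by (intro sum.mono_neutral_right) auto
  also have "\<dots> \<le> (\<Sum>T\<in>{T \<in> Bad n u Nb. fourier_coeff n F T \<noteq> 0}. \<zeta>)"
  proof (rule sum_mono)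
    fix T assume T: "T \<in> {T \<in> Bad n u Nb. fourier_coeff n F T \<noteq> 0}"
    then obtain i where i: "i \<in> T" "i \<noteq> u" "i \<notin> Nb" by (auto simp: Bad_def)
    have "T \<subseteq> {..<n}" "u \<in> T" using T by (auto simp: Bad_def Tu_def)
    hence "\<not> \<zeta> \<le> \<bar>fourier_coeff n F T\<bar>" using hyp[of T i] i by blast
    thus "\<bar>fourier_coeff n F T\<bar> \<le> \<zeta>" by simp
  qed
  also have "\<dots> = \<zeta> * real (card {T \<in> Bad n u Nb. fourier_coeff n F T \<noteq> 0})" by simp
  also have "\<dots> \<le> \<zeta> * real (card {T. T \<subseteq> {..<n} \<and> u \<in> T \<and> fourier_coeff n F T \<noteq> 0})"
  proof -
    have "finite {T. T \<subseteq> {..<n} \<and> u \<in> T \<and> fourier_coeff n F T \<noteq> 0}"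
      by (rule finite_subset[OF _ finite_Tu[of n u]]) (auto simp: Tu_def)
    hence "card {T \<in> Bad n u Nb. fourier_coeff n F T \<noteq> 0} \<le> card {T. T \<subseteq> {..<n} \<and> u \<in> T \<and> fourier_coeff n F T \<noteq> 0}"
      by (rule card_mono) (auto simp: Bad_def Tu_def)
    thus ?thesis using z by simp
  qed
  finally show ?thesis by (simp only: mult.assoc)
qed

definition refl_u :: "nat \<Rightarrow> (nat \<Rightarrow> real) \<Rightarrow> (nat \<Rightarrow> real)" where
  "refl_u u x = x(u := - x u)"

lemma refl_bij: "u < n \<Longrightarrow> bij_betw (refl_u u) (cube n) (cube n)"
proof -
  assume u: "u < n"
  have m: "refl_u u \<in> cube n \<rightarrow> cube n"
  proof
    fix x assume x: "x \<in> cube n"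
    have "x u = 1 \<or> x u = -1" by (rule cube_val[OF x u])
    thus "refl_u u x \<in> cube n" unfolding refl_u_def by (intro cube_upd[OF x u]) auto
  qed
  show ?thesis
    by (rule bij_betwI[where g = "refl_u u", OF m m]) (simp_all add: refl_u_def fun_eq_iff)
qed

lemma pair_sum:
  fixes A :: "(nat \<Rightarrow> real) \<Rightarrow> real"
  assumes u: "u < n" and x: "x \<in> cube n"
  shows "A x + A (refl_u u x) = A (x(u := 1)) + A (x(u := -1))"
proof -
  have "x u = 1 \<or> x u = -1" using cube_val[OF x u] .
  thus ?thesis
  proof
    assume "x u = 1"
    hence e: "x(u := 1) = x" "refl_u u x = x(u := -1)" by (auto simp: refl_u_def fun_eq_iff)
    show ?thesis unfolding e by (rule refl)
  next
    assume "x u = -1"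
    hence e: "x(u := -1) = x" "refl_u u x = x(u := 1)" by (auto simp: refl_u_def fun_eq_iff)
    show ?thesis unfolding e by (rule add.commute)
  qed
qed

lemma sum_refl_avg:
  fixes A :: "(nat \<Rightarrow> real) \<Rightarrow> real"
  assumes u: "u < n"
  shows "(\<Sum>x\<in>cube n. A x) = (\<Sum>x\<in>cube n. (A (x(u := 1)) + A (x(u := -1))) / 2)"
proof -
  have "(\<Sum>x\<in>cube n. A (refl_u u x)) = (\<Sum>x\<in>cube n. A x)"
    by (rule sum.reindex_bij_betw[OF refl_bij[OF u]])
  hence "(\<Sum>x\<in>cube n. A x) = (\<Sum>x\<in>cube n. (A x + A (refl_u u x)) / 2)"
    by (simp add: sum.distrib sum_divide_distrib[symmetric])
  also have "\<dots> = (\<Sum>x\<in>cube n. (A (x(u := 1)) + A (x(u := -1))) / 2)"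
    by (intro sum.cong refl) (simp add: pair_sum[OF u])
  finally show ?thesis .
qed

lemma pair_alg:
  fixes P1 P2 H1 H2 :: real
  assumes "P1 + P2 > 0"
  shows "P1 * (P1 / (P1 + P2) * H1 + (1 - P1 / (P1 + P2)) * H2) + P2 * (P1 / (P1 + P2) * H1 + (1 - P1 / (P1 + P2)) * H2)
       = P1 * H1 + P2 * H2"
proof -
  define q where "q = P1 / (P1 + P2)"
  have a: "(P1 + P2) * q = P1" using assms by (simp add: q_def)
  have b: "(P1 + P2) * (1 - q) = P2" using assms by (simp add: q_def field_simps)
  have "P1 * (q * H1 + (1 - q) * H2) + P2 * (q * H1 + (1 - q) * H2) = ((P1 + P2) * q) * H1 + ((P1 + P2) * (1 - q)) * H2"
    by (simp add: algebra_simps)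
  also have "\<dots> = P1 * H1 + P2 * H2" by (simp only: a b)
  finally show ?thesis by (simp add: q_def)
qed

lemma pairing_identity:
  assumes u: "u < n"
  shows "(\<Sum>x\<in>cube n. rbm_marginal n m J h g x * hh x)
       = (\<Sum>x\<in>cube n. rbm_marginal n m J h g x * (cond_prob_one n m J h g u x * hh (x(u := 1))
                                 + (1 - cond_prob_one n m J h g u x) * hh (x(u := -1))))"
proof -
  define p where "p = rbm_marginal n m J h g"
  define \<pi> where "\<pi> = cond_prob_one n m J h g u"
  have \<pi>upd: "\<pi> (x(u := v)) = \<pi> x" for x v by (simp add: \<pi>_def cond_prob_one_def)
  have pi_eq: "\<pi> x = p (x(u := 1)) / (p (x(u := 1)) + p (x(u := -1)))" for x
    by (simp add: \<pi>_def p_def cond_prob_one_def)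
  have pos: "p (x(u := 1)) + p (x(u := -1)) > 0" for x by (simp add: p_def marg_pos add_pos_pos)
  have "(\<Sum>x\<in>cube n. p x * hh x) = (\<Sum>x\<in>cube n. (p (x(u := 1)) * hh (x(u := 1)) + p (x(u := -1)) * hh (x(u := -1))) / 2)"
    by (rule sum_refl_avg[OF u])
  also have "\<dots> = (\<Sum>x\<in>cube n. (p (x(u := 1)) * (\<pi> (x(u := 1)) * hh ((x(u := 1))(u := 1)) + (1 - \<pi> (x(u := 1))) * hh ((x(u := 1))(u := -1)))
                                 + p (x(u := -1)) * (\<pi> (x(u := -1)) * hh ((x(u := -1))(u := 1)) + (1 - \<pi> (x(u := -1))) * hh ((x(u := -1))(u := -1)))) / 2)"
  proof (intro sum.cong refl)
    fix x
    have e: "p (x(u := 1)) * (\<pi> x * hh (x(u := 1)) + (1 - \<pi> x) * hh (x(u := -1)))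
           + p (x(u := -1)) * (\<pi> x * hh (x(u := 1)) + (1 - \<pi> x) * hh (x(u := -1)))
           = p (x(u := 1)) * hh (x(u := 1)) + p (x(u := -1)) * hh (x(u := -1))"
      unfolding pi_eq by (rule pair_alg[OF pos[of x]])
    show "(p (x(u := 1)) * hh (x(u := 1)) + p (x(u := -1)) * hh (x(u := -1))) / 2 =
         (p (x(u := 1)) * (\<pi> (x(u := 1)) * hh ((x(u := 1))(u := 1)) + (1 - \<pi> (x(u := 1))) * hh ((x(u := 1))(u := -1)))
          + p (x(u := -1)) * (\<pi> (x(u := -1)) * hh ((x(u := -1))(u := 1)) + (1 - \<pi> (x(u := -1))) * hh ((x(u := -1))(u := -1)))) / 2"
      using e by (simp add: \<pi>upd)
  qed
  also have "\<dots> = (\<Sum>x\<in>cube n. p x * (\<pi> x * hh (x(u := 1)) + (1 - \<pi> x) * hh (x(u := -1))))"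
    by (rule sum_refl_avg[OF u, symmetric])
  finally show ?thesis by (simp add: p_def \<pi>_def)
qed

lemma feat_upd: "u \<notin> Nb \<Longrightarrow> feat_dot Nb w (x(u := v)) = feat_dot Nb w x"
  unfolding feat_dot_def by (intro sum.cong refl) (auto intro!: chi_upd_notin)

lemma feat_abs:
  assumes "x \<in> cube n" "Nb \<subseteq> {..<n}"
  shows "\<bar>feat_dot Nb w x\<bar> \<le> l1_norm Nb w"
proof -
  have "\<bar>feat_dot Nb w x\<bar> \<le> (\<Sum>T\<in>Pow Nb. \<bar>w T * chi T x\<bar>)" unfolding feat_dot_def by (rule sum_abs)
  also have "\<dots> = l1_norm Nb w" unfolding l1_norm_def
    using assms by (intro sum.cong refl) (auto simp: abs_mult chi_abs)
  finally show ?thesis .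
qed

definition Lpop :: "nat \<Rightarrow> nat \<Rightarrow> (nat \<Rightarrow> nat \<Rightarrow> real) \<Rightarrow> (nat \<Rightarrow> real) \<Rightarrow> (nat \<Rightarrow> real)
    \<Rightarrow> nat \<Rightarrow> nat set \<Rightarrow> (nat set \<Rightarrow> real) \<Rightarrow> real" where
  "Lpop n m J h g u Nb w = (\<Sum>x\<in>cube n. rbm_marginal n m J h g x * lg (x u * feat_dot Nb w x))"

lemma det_u:
  fixes n m J h g u Nb \<zeta> \<epsilon> \<gamma> \<psi> w
  defines "ff \<equiv> rbm_f n m J h g"
  assumes u: "u < n" "u \<notin> Nb" "Nb \<subseteq> {..<n}" and z: "\<zeta> > 0" and e: "\<epsilon> > 0"
    and hyp: "\<And>i T. T \<subseteq> {..<n} \<Longrightarrow> u \<in> T \<Longrightarrow> i \<in> T \<Longrightarrow> i \<noteq> u \<Longrightarrow> \<zeta> \<le> \<bar>fourier_coeff n ff T\<bar> \<Longrightarrow> i \<in> Nb"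
    and gam: "(\<Sum>T\<in>Tu n u. \<bar>fourier_coeff n ff T\<bar>) \<le> \<gamma>"
    and psi: "real (card {T. T \<subseteq> {..<n} \<and> u \<in> T \<and> fourier_coeff n ff T \<noteq> 0}) \<le> \<psi>"
    and zp: "\<zeta> * \<psi> * sqrt (1 + exp (2 * \<gamma>)) \<le> sqrt \<epsilon>"
    and Ldiff: "Lpop n m J h g u Nb w - Lpop n m J h g u Nb (wt n ff u) \<le> \<epsilon>"
  shows "pred_mse n m J h g u Nb w \<le> \<epsilon>"
proof -
  define p where "p = rbm_marginal n m J h g"
  define a where "a x = ff (x(u := 1)) - ff (x(u := -1))" for x
  define Fh where "Fh x = feat_dot Nb w x" for x
  define Ft where "Ft x = feat_dot Nb (wt n ff u) x" for x
  have pnn: "p x \<ge> 0" for x using marg_pos[of n m J h g x] by (simp add: p_def)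
  have p1: "sum p (cube n) = 1" by (simp add: p_def marg_sum)
  have pi: "cond_prob_one n m J h g u x = sigmoid (a x)" for x by (simp add: cond_sig a_def ff_def)
  have psi0: "\<psi> \<ge> 0" using psi by (meson of_nat_0_le_iff order_trans)
  have gam0: "\<gamma> \<ge> 0" using gam by (meson sum_nonneg abs_ge_zero order_trans)
  have LD: "Lpop n m J h g u Nb w - Lpop n m J h g u Nb (wt n ff u) = (\<Sum>x\<in>cube n. p x * (DKL (a x) (Fh x) - DKL (a x) (Ft x)))"
  proof -
    have "Lpop n m J h g u Nb w - Lpop n m J h g u Nb (wt n ff u) = (\<Sum>x\<in>cube n. p x * (lg (x u * Fh x) - lg (x u * Ft x)))"
      by (simp add: Lpop_def p_def Fh_def Ft_def sum_subtractf[symmetric] algebra_simps)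
    also have "\<dots> = (\<Sum>x\<in>cube n. p x * (cond_prob_one n m J h g u x * (lg ((x(u:=1)) u * Fh (x(u:=1))) - lg ((x(u:=1)) u * Ft (x(u:=1))))
                    + (1 - cond_prob_one n m J h g u x) * (lg ((x(u:=-1)) u * Fh (x(u:=-1))) - lg ((x(u:=-1)) u * Ft (x(u:=-1))))))"
      unfolding p_def by (rule pairing_identity[OF u(1)])
    also have "\<dots> = (\<Sum>x\<in>cube n. p x * (DKL (a x) (Fh x) - DKL (a x) (Ft x)))"
    proof (intro sum.cong refl)
      fix x
      have e1: "Fh (x(u:=v)) = Fh x" "Ft (x(u:=v)) = Ft x" for v
        by (simp_all only: Fh_def Ft_def feat_upd[OF u(2)])
      have e2: "(x(u:=1)) u = 1" "(x(u:=-1)) u = -1" by simp_all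
      have e3: "1 - sigmoid (a x) = sigmoid (- a x)" by (simp add: sig_neg)
      show "p x * (cond_prob_one n m J h g u x * (lg ((x(u:=1)) u * Fh (x(u:=1))) - lg ((x(u:=1)) u * Ft (x(u:=1))))
                    + (1 - cond_prob_one n m J h g u x) * (lg ((x(u:=-1)) u * Fh (x(u:=-1))) - lg ((x(u:=-1)) u * Ft (x(u:=-1)))))
          = p x * (DKL (a x) (Fh x) - DKL (a x) (Ft x))"
        unfolding e1 e2 pi e3 DKL_def by (simp add: algebra_simps)
    qed
    finally show ?thesis .
  qed
  have Ftb: "\<bar>Ft x\<bar> \<le> 2 * \<gamma>" if x: "x \<in> cube n" for x
    using feat_abs[OF x u(3), of "wt n ff u"] l1_wt[OF u, of ff] gam unfolding Ft_def by linarith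
  have sq: "(\<zeta> * \<psi>)\<^sup>2 * (1 + exp (2 * \<gamma>)) \<le> \<epsilon>"
  proof -
    have "(\<zeta> * \<psi> * sqrt (1 + exp (2 * \<gamma>)))\<^sup>2 \<le> (sqrt \<epsilon>)\<^sup>2"
      using zp z psi0 by (intro power_mono) auto
    thus ?thesis using e by (simp add: power_mult_distrib add_pos_pos)
  qed
  have DKt: "DKL (a x) (Ft x) \<le> 3 / 4 * \<epsilon>" if x: "x \<in> cube n" for x
  proof -
    have ab0: "\<bar>a x - Ft x\<bar> \<le> 2 * \<zeta> * real (card {T. T \<subseteq> {..<n} \<and> u \<in> T \<and> fourier_coeff n ff T \<noteq> 0})"
      using approx_bound[OF u x z hyp] unfolding a_def Ft_def by simp
    have "2 * \<zeta> * real (card {T. T \<subseteq> {..<n} \<and> u \<in> T \<and> fourier_coeff n ff T \<noteq> 0}) \<le> 2 * \<zeta> * \<psi>"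
      using psi z by (intro mult_left_mono) auto
    hence ab: "\<bar>a x - Ft x\<bar> \<le> 2 * \<zeta> * \<psi>" using ab0 by linarith
    have "\<bar>sigmoid (a x) - sigmoid (Ft x)\<bar> \<le> \<zeta> * \<psi> / 2"
      using sig_lip[of "a x" "Ft x"] ab by simp
    hence "\<bar>sigmoid (a x) - sigmoid (Ft x)\<bar>\<^sup>2 \<le> (\<zeta> * \<psi> / 2)\<^sup>2"
      by (intro power_mono) auto
    hence s2: "(sigmoid (a x) - sigmoid (Ft x))\<^sup>2 \<le> (\<zeta> * \<psi>)\<^sup>2 / 4"
      by (simp add: power_divide)
    have ex: "2 + exp (Ft x) + exp (- Ft x) \<le> 3 * (1 + exp (2 * \<gamma>))"
    proof -
      have A: "exp (Ft x) \<le> exp (2 * \<gamma>)" "exp (- Ft x) \<le> exp (2 * \<gamma>)" using Ftb[OF x] by auto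
      have D: "exp (2 * \<gamma>) > 0" by simp
      have E: "3 * (1 + exp (2 * \<gamma>)) = 3 + 3 * exp (2 * \<gamma>)" by simp
      have C: "exp (Ft x) \<le> 1 \<or> exp (- Ft x) \<le> 1" by (cases "Ft x \<ge> 0") auto
      thus ?thesis
      proof
        assume "exp (Ft x) \<le> 1" thus ?thesis using A D E by linarith
      next
        assume "exp (- Ft x) \<le> 1" thus ?thesis using A D E by linarith
      qed
    qed
    have "DKL (a x) (Ft x) \<le> (sigmoid (a x) - sigmoid (Ft x))\<^sup>2 / (sigmoid (Ft x) * (1 - sigmoid (Ft x)))"
      by (rule DKL_upper)
    also have "\<dots> = (sigmoid (a x) - sigmoid (Ft x))\<^sup>2 * (2 + exp (Ft x) + exp (- Ft x))"
      using sig_var_inv[of "Ft x"] by (metis times_divide_eq_right mult_1_right)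
    also have "\<dots> \<le> (\<zeta> * \<psi>)\<^sup>2 / 4 * (3 * (1 + exp (2 * \<gamma>)))"
      by (intro mult_mono s2 ex) (auto intro: add_nonneg_nonneg)
    also have "\<dots> = 3 / 4 * ((\<zeta> * \<psi>)\<^sup>2 * (1 + exp (2 * \<gamma>)))" by simp
    also have "\<dots> \<le> 3 / 4 * \<epsilon>" using sq by simp
    finally show ?thesis .
  qed
  have "pred_mse n m J h g u Nb w = (\<Sum>x\<in>cube n. p x * (sigmoid (a x) - sigmoid (Fh x))\<^sup>2)"
    by (simp add: pred_mse_def p_def pi Fh_def)
  also have "\<dots> \<le> (\<Sum>x\<in>cube n. p x * (DKL (a x) (Fh x) / 2))"
    using pinsker pnn by (intro sum_mono mult_left_mono) (auto simp: field_simps)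
  also have "\<dots> = ((\<Sum>x\<in>cube n. p x * (DKL (a x) (Fh x) - DKL (a x) (Ft x))) + (\<Sum>x\<in>cube n. p x * DKL (a x) (Ft x))) / 2"
    by (simp add: sum_divide_distrib[symmetric] sum.distrib[symmetric] algebra_simps)
  also have "\<dots> \<le> (\<epsilon> + (\<Sum>x\<in>cube n. p x * (3 / 4 * \<epsilon>))) / 2"
  proof -
    have "(\<Sum>x\<in>cube n. p x * DKL (a x) (Ft x)) \<le> (\<Sum>x\<in>cube n. p x * (3 / 4 * \<epsilon>))"
      using DKt pnn by (intro sum_mono mult_left_mono) auto
    thus ?thesis using Ldiff LD by simp
  qed
  also have "\<dots> = (\<epsilon> + 3 / 4 * \<epsilon>) / 2"
  proof -
    have "(\<Sum>x\<in>cube n. p x * (3 / 4 * \<epsilon>)) = (\<Sum>x\<in>cube n. p x) * (3 / 4 * \<epsilon>)"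
      by (rule sum_distrib_right[symmetric])
    thus ?thesis using p1 by simp
  qed
  also have "\<dots> \<le> \<epsilon>" using e by simp
  finally show ?thesis .
qed

lemma chernoff:
  assumes pnn: "\<And>x. x \<in> \<Omega> \<Longrightarrow> p x \<ge> 0" and mu: "\<mu> \<ge> 0"
  shows "EE \<Omega> p M (\<lambda>S. if c \<le> Z S then 1 else 0) \<le> exp (- \<mu> * c) * EE \<Omega> p M (\<lambda>S. exp (\<mu> * Z S))"
proof -
  have "EE \<Omega> p M (\<lambda>S. if c \<le> Z S then 1 else 0) \<le> EE \<Omega> p M (\<lambda>S. exp (- \<mu> * c) * exp (\<mu> * Z S))"
  proof (rule EE_mono[OF pnn], assumption)
    fix S
    show "(if c \<le> Z S then 1 else 0) \<le> exp (- \<mu> * c) * exp (\<mu> * Z S)"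
    proof (cases "c \<le> Z S")
      case True
      hence "0 \<le> - \<mu> * c + \<mu> * Z S" using mu by (simp add: algebra_simps mult_left_mono)
      hence "1 \<le> exp (- \<mu> * c + \<mu> * Z S)" by simp
      also have "exp (- \<mu> * c + \<mu> * Z S) = exp (- \<mu> * c) * exp (\<mu> * Z S)" by (rule exp_add)
      finally show ?thesis using True by simp
    qed simp
  qed
  also have "\<dots> = exp (- \<mu> * c) * EE \<Omega> p M (\<lambda>S. exp (\<mu> * Z S))" by (rule EE_cmult)
  finally show ?thesis .
qed

lemma sample_prob_EE:
  "sample_prob n m J h g M E = EE (cube n) (rbm_marginal n m J h g) M (\<lambda>S. if E S then 1 else 0)"
proof -
  have "sample_prob n m J h g M E = (\<Sum>S\<in>PiE {..<M} (\<lambda>_. cube n). if E S then (\<Prod>k<M. rbm_marginal n m J h g (S k)) else 0)"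
    unfolding sample_prob_def by (rule sum.inter_filter) (simp add: finite_PiE finite_cube)
  also have "\<dots> = EE (cube n) (rbm_marginal n m J h g) M (\<lambda>S. if E S then 1 else 0)"
    unfolding EE_def by (rule sum.cong[OF refl]) simp
  finally show ?thesis .
qed

lemma per_u:
  fixes n m J h g u Nb D \<zeta> \<epsilon> \<delta> \<gamma> \<psi> M What
  defines "ff \<equiv> rbm_f n m J h g" and "p \<equiv> rbm_marginal n m J h g"
  assumes u: "u < n" "u \<notin> Nb" "Nb \<subseteq> {..<n}" and cardNb: "card Nb \<le> D"
    and z: "\<zeta> > 0" and e: "\<epsilon> > 0" and d: "\<delta> > 0"
    and hyp: "\<And>i T. T \<subseteq> {..<n} \<Longrightarrow> u \<in> T \<Longrightarrow> i \<in> T \<Longrightarrow> i \<noteq> u \<Longrightarrow> \<zeta> \<le> \<bar>fourier_coeff n ff T\<bar> \<Longrightarrow> i \<in> Nb"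
    and gam: "(\<Sum>T\<in>Tu n u. \<bar>fourier_coeff n ff T\<bar>) \<le> \<gamma>" and gpos: "\<gamma> > 0"
    and psi: "real (card {T. T \<subseteq> {..<n} \<and> u \<in> T \<and> fourier_coeff n ff T \<noteq> 0}) \<le> \<psi>"
    and zp: "\<zeta> * \<psi> * sqrt (1 + exp (2 * \<gamma>)) \<le> sqrt \<epsilon>"
    and REG: "\<And>S. S \<in> PiE {..<M} (\<lambda>_. cube n) \<Longrightarrow> is_regression_estimate Nb u M S \<gamma> (What S)"
    and Mpos: "M > 0"
    and MB: "ln (8 * real n * 2 ^ D / \<delta>) \<le> real M * \<epsilon>\<^sup>2 / (128 * \<gamma>\<^sup>2)"
  shows "EE (cube n) p M (\<lambda>S. if pred_mse n m J h g u Nb (What S) \<le> \<epsilon> then 0 else 1) \<le> \<delta> / (2 * real n)"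
proof -
  have pnn: "\<And>x. x \<in> cube n \<Longrightarrow> p x \<ge> 0" using marg_pos by (simp add: p_def less_imp_le)
  have p1: "sum p (cube n) = 1" by (simp add: p_def marg_sum)
  have fin: "finite (cube n)" by (rule finite_cube)
  have n0: "real n > 0" using u by simp
  define wT where "wT = wt n ff u"
  define W where "W = What ` PiE {..<M} (\<lambda>_. cube n) \<union> {wT}"
  have W: "finite W" "W \<noteq> {}" unfolding W_def by (auto simp: finite_PiE fin)
  define N where "N = Pow Nb"
  have finNb: "finite Nb" using u(3) finite_subset by blast
  have N: "finite N" "N \<noteq> {}" unfolding N_def using finNb by auto
  have cardN: "real (card N) \<le> 2 ^ D"
  proof -
    have "card N = 2 ^ card Nb" unfolding N_def using finNb by (rule card_Pow)
    hence "real (card N) = 2 ^ card Nb" by simp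
    also have "\<dots> \<le> 2 ^ D" using cardNb by (intro power_increasing) auto
    finally show ?thesis .
  qed
  define R where "R = 2 * \<gamma>"
  have R: "R \<ge> 0" using gpos by (simp add: R_def)
  have l1W: "(\<Sum>i\<in>N. \<bar>w i\<bar>) \<le> R" if wW: "w \<in> W" for w
  proof -
    have "l1_norm Nb w \<le> 2 * \<gamma>"
    proof (cases "w = wT")
      case True
      thus ?thesis using l1_wt[OF u, of ff] gam by (simp add: wT_def)
    next
      case False
      then obtain S where "S \<in> PiE {..<M} (\<lambda>_. cube n)" "w = What S" using wW by (auto simp: W_def)
      thus ?thesis using REG by (simp add: is_regression_estimate_def)
    qed
    thus ?thesis by (simp add: l1_norm_def N_def R_def)
  qed
  define ph where "ph T x = x u * chi T x" for T and x :: "nat \<Rightarrow> real"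
  have bnd: "\<bar>ph T x\<bar> \<le> 1" if "T \<in> N" "x \<in> cube n" for T x
  proof -
    have "\<bar>x u\<bar> = 1" using cube_val[OF that(2) u(1)] by auto
    moreover have "\<bar>chi T x\<bar> = 1" using that u(3) by (intro chi_abs) (auto simp: N_def)
    ultimately show ?thesis by (simp add: ph_def abs_mult)
  qed
  have phsum: "(\<Sum>T\<in>N. w T * ph T x) = x u * feat_dot Nb w x" for w x
    by (simp add: ph_def N_def feat_dot_def sum_distrib_left mult_ac)
  define \<phi>1 where "\<phi>1 t = lg t - ln 2" for t
  define \<phi>2 where "\<phi>2 t = - (lg t - ln 2)" for t
  have lip1: "\<bar>\<phi>1 x - \<phi>1 y\<bar> \<le> \<bar>x - y\<bar>" for x y unfolding \<phi>1_def by (rule lg_lip)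
  have lip2: "\<bar>\<phi>2 x - \<phi>2 y\<bar> \<le> \<bar>x - y\<bar>" for x y unfolding \<phi>2_def using lg_lip[of x y] by (simp add: abs_minus_commute)
  have z1: "\<phi>1 0 = 0" "\<phi>2 0 = 0" by (simp_all add: \<phi>1_def \<phi>2_def lg0)
  define \<mu> where "\<mu> = \<epsilon> / (32 * \<gamma>\<^sup>2)"
  have mu: "\<mu> \<ge> 0" using e by (simp add: \<mu>_def)
  define t where "t = \<epsilon> / 2"
  define Z1 where "Z1 S = (\<Sum>k<M. (\<Sum>y\<in>cube n. p y * \<phi>1 (\<Sum>T\<in>N. What S T * ph T y)) - \<phi>1 (\<Sum>T\<in>N. What S T * ph T (S k)))" for S
  define Z2 where "Z2 S = (\<Sum>k<M. (\<Sum>y\<in>cube n. p y * \<phi>2 (\<Sum>T\<in>N. wT T * ph T y)) - \<phi>2 (\<Sum>T\<in>N. wT T * ph T (S k)))" for S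
  have om1: "What S \<in> W" if "S \<in> PiE {..<M} (\<lambda>_. cube n)" for S using that by (simp add: W_def)
  have om2: "(\<lambda>_. wT) S \<in> W" for S :: "nat \<Rightarrow> nat \<Rightarrow> real" by (simp add: W_def)
  have dev1: "EE (cube n) p M (\<lambda>S. exp (\<mu> * Z1 S)) \<le> 2 * real (card N) * exp (2 * real M * \<mu>\<^sup>2 * R\<^sup>2)"
    unfolding Z1_def by (rule deviation[OF fin pnn p1 W N R mu l1W bnd lip1 z1(1) om1])
  have dev2: "EE (cube n) p M (\<lambda>S. exp (\<mu> * Z2 S)) \<le> 2 * real (card N) * exp (2 * real M * \<mu>\<^sup>2 * R\<^sup>2)"
    unfolding Z2_def using deviation[OF fin pnn p1 W N R mu l1W bnd lip2 z1(2) om2] by simp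
  have expo: "exp (- \<mu> * (real M * t)) * (2 * real (card N) * exp (2 * real M * \<mu>\<^sup>2 * R\<^sup>2)) \<le> \<delta> / (4 * real n)"
  proof -
    have g2: "\<gamma>\<^sup>2 > 0" using gpos by simp
    have "- \<mu> * (real M * t) + 2 * real M * \<mu>\<^sup>2 * R\<^sup>2 = - (real M * \<epsilon>\<^sup>2 / (128 * \<gamma>\<^sup>2))"
      using g2 unfolding \<mu>_def t_def R_def by (simp add: field_simps power2_eq_square)
    hence "exp (- \<mu> * (real M * t)) * exp (2 * real M * \<mu>\<^sup>2 * R\<^sup>2) = exp (- (real M * \<epsilon>\<^sup>2 / (128 * \<gamma>\<^sup>2)))"
      by (simp flip: exp_add)
    also have "\<dots> \<le> exp (- ln (8 * real n * 2 ^ D / \<delta>))" using MB by simp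
    also have "\<dots> = \<delta> / (8 * real n * 2 ^ D)"
      using n0 d by (simp add: exp_minus exp_ln)
    finally have A: "exp (- \<mu> * (real M * t)) * exp (2 * real M * \<mu>\<^sup>2 * R\<^sup>2) \<le> \<delta> / (8 * real n * 2 ^ D)" .
    have "exp (- \<mu> * (real M * t)) * (2 * real (card N) * exp (2 * real M * \<mu>\<^sup>2 * R\<^sup>2))
        = 2 * real (card N) * (exp (- \<mu> * (real M * t)) * exp (2 * real M * \<mu>\<^sup>2 * R\<^sup>2))" by simp
    also have "\<dots> \<le> 2 * 2 ^ D * (\<delta> / (8 * real n * 2 ^ D))"
      using A cardN by (intro mult_mono) auto
    also have "\<dots> = \<delta> / (4 * real n)" using n0 by (simp add: field_simps)
    finally show ?thesis .
  qed
  have P1: "EE (cube n) p M (\<lambda>S. if real M * t \<le> Z1 S then 1 else 0) \<le> \<delta> / (4 * real n)"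
  proof -
    have "EE (cube n) p M (\<lambda>S. if real M * t \<le> Z1 S then 1 else 0) \<le> exp (- \<mu> * (real M * t)) * EE (cube n) p M (\<lambda>S. exp (\<mu> * Z1 S))"
      by (rule chernoff[OF pnn mu])
    also have "\<dots> \<le> exp (- \<mu> * (real M * t)) * (2 * real (card N) * exp (2 * real M * \<mu>\<^sup>2 * R\<^sup>2))"
      by (rule mult_left_mono[OF dev1]) simp
    also have "\<dots> \<le> \<delta> / (4 * real n)" by (rule expo)
    finally show ?thesis .
  qed
  have P2: "EE (cube n) p M (\<lambda>S. if real M * t \<le> Z2 S then 1 else 0) \<le> \<delta> / (4 * real n)"
  proof -
    have "EE (cube n) p M (\<lambda>S. if real M * t \<le> Z2 S then 1 else 0) \<le> exp (- \<mu> * (real M * t)) * EE (cube n) p M (\<lambda>S. exp (\<mu> * Z2 S))"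
      by (rule chernoff[OF pnn mu])
    also have "\<dots> \<le> exp (- \<mu> * (real M * t)) * (2 * real (card N) * exp (2 * real M * \<mu>\<^sup>2 * R\<^sup>2))"
      by (rule mult_left_mono[OF dev2]) simp
    also have "\<dots> \<le> \<delta> / (4 * real n)" by (rule expo)
    finally show ?thesis .
  qed
  have good: "pred_mse n m J h g u Nb (What S) \<le> \<epsilon>"
    if S: "S \<in> PiE {..<M} (\<lambda>_. cube n)" and g1: "Z1 S < real M * t" and g2: "Z2 S < real M * t" for S
  proof -
    define Lh where "Lh = Lpop n m J h g u Nb (What S)"
    define Lt where "Lt = Lpop n m J h g u Nb wT"
    have cst: "(\<Sum>y\<in>cube n. p y * (A y - ln 2)) = (\<Sum>y\<in>cube n. p y * A y) - ln 2" for A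
    proof -
      have "(\<Sum>y\<in>cube n. p y * (A y - ln 2)) = (\<Sum>y\<in>cube n. p y * A y) - (\<Sum>y\<in>cube n. p y) * ln 2"
        by (simp add: algebra_simps sum_subtractf sum_distrib_right)
      thus ?thesis using p1 by simp
    qed
    have Ex1: "(\<Sum>y\<in>cube n. p y * \<phi>1 (\<Sum>T\<in>N. What S T * ph T y)) = Lh - ln 2"
      unfolding Lh_def Lpop_def \<phi>1_def phsum p_def[symmetric] cst ..
    have Ex2: "(\<Sum>y\<in>cube n. p y * \<phi>2 (\<Sum>T\<in>N. wT T * ph T y)) = - (Lt - ln 2)"
    proof -
      have "(\<Sum>y\<in>cube n. p y * \<phi>2 (\<Sum>T\<in>N. wT T * ph T y)) = - (\<Sum>y\<in>cube n. p y * (lg (y u * feat_dot Nb wT y) - ln 2))"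
        unfolding \<phi>2_def phsum by (simp add: sum_negf[symmetric] algebra_simps)
      also have "\<dots> = - (Lt - ln 2)" unfolding cst Lt_def Lpop_def p_def[symmetric] ..
      finally show ?thesis .
    qed
    have Z1e: "Z1 S = real M * Lh - (\<Sum>k<M. lg (S k u * feat_dot Nb (What S) (S k)))"
      unfolding Z1_def Ex1 unfolding \<phi>1_def phsum by (simp add: sum_subtractf)
    have Z2e: "Z2 S = (\<Sum>k<M. lg (S k u * feat_dot Nb wT (S k))) - real M * Lt"
      unfolding Z2_def Ex2 unfolding \<phi>2_def phsum by (simp add: sum_subtractf)
    have lwt: "l1_norm Nb wT \<le> 2 * \<gamma>" using l1_wt[OF u, of ff] gam by (simp add: wT_def)
    have "log_loss Nb u M S (What S) \<le> log_loss Nb u M S wT"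
      using REG[OF S] lwt by (simp add: is_regression_estimate_def)
    hence "(\<Sum>k<M. lg (S k u * feat_dot Nb (What S) (S k))) \<le> (\<Sum>k<M. lg (S k u * feat_dot Nb wT (S k)))"
      using Mpos by (simp add: log_loss_def lg_def divide_right_mono_neg divide_le_cancel)
    hence "real M * (Lh - Lt) < real M * \<epsilon>"
      using g1 g2 Z1e Z2e by (simp add: t_def algebra_simps)
    hence "Lh - Lt \<le> \<epsilon>" using Mpos by simp
    hence L: "Lpop n m J h g u Nb (What S) - Lpop n m J h g u Nb (wt n (rbm_f n m J h g) u) \<le> \<epsilon>"
      unfolding Lh_def Lt_def wT_def ff_def .
    show ?thesis by (rule det_u[OF u z e hyp[unfolded ff_def] gam[unfolded ff_def] psi[unfolded ff_def] zp L])
  qed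
  have "EE (cube n) p M (\<lambda>S. if pred_mse n m J h g u Nb (What S) \<le> \<epsilon> then 0 else 1)
      \<le> EE (cube n) p M (\<lambda>S. (if real M * t \<le> Z1 S then 1 else 0) + (if real M * t \<le> Z2 S then 1 else 0))"
    by (rule EE_mono_PiE[OF pnn]) (use good in \<open>auto simp: not_less\<close>)
  also have "\<dots> \<le> \<delta> / (4 * real n) + \<delta> / (4 * real n)"
    unfolding EE_add using P1 P2 by linarith
  also have "\<dots> = \<delta> / (2 * real n)" by (simp add: field_simps)
  finally show ?thesis .
qed

lemma EE_diff: "EE A q M (\<lambda>S. f S - g S) = EE A q M f - EE A q M g"
  by (simp add: EE_def sum_subtractf right_diff_distrib)

lemma union_pw:
  fixes P :: "nat \<Rightarrow> bool"
  shows "1 - (\<Sum>u<n. if P u then 0 else 1) \<le> (if \<forall>u<n. P u then 1 else (0::real))"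
proof (cases "\<forall>u<n. P u")
  case True thus ?thesis by simp
next
  case False
  then obtain u0 where u0: "u0 < n" "\<not> P u0" by auto
  have "(if P u0 then 0 else 1) \<le> (\<Sum>u<n. if P u then 0 else (1::real))"
    by (rule member_le_sum) (use u0 in auto)
  thus ?thesis using u0 False by simp
qed

theorem theorem9:
  shows "\<exists>C>0. \<forall>(n::nat) (m::nat) (J::nat \<Rightarrow> nat \<Rightarrow> real) (h::nat \<Rightarrow> real) (g::nat \<Rightarrow> real)
      (\<delta>::real) (\<epsilon>::real) (\<zeta>::real) (nb::nat \<Rightarrow> nat set) (M::nat)
      (What::nat \<Rightarrow> (nat \<Rightarrow> nat \<Rightarrow> real) \<Rightarrow> nat set \<Rightarrow> real).
    \<delta> > 0 \<longrightarrow> \<epsilon> > 0 \<longrightarrow> \<zeta> > 0 \<longrightarrow>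
    (\<forall>u<n. nb u \<subseteq> mrf_nbhd n (rbm_f n m J h g) u \<and>
       (\<forall>i T. T \<subseteq> {..<n} \<and> u \<in> T \<and> i \<in> T \<and> i \<noteq> u \<and>
              \<bar>fourier_coeff n (rbm_f n m J h g) T\<bar> \<ge> \<zeta> \<longrightarrow> i \<in> nb u)) \<longrightarrow>
    (\<forall>u<n. \<forall>S\<in>PiE {..<M} (\<lambda>_. cube n).
       is_regression_estimate (nb u) u M S (gamma_param n (rbm_f n m J h g)) (What u S)) \<longrightarrow>
    real M \<ge> C * (gamma_param n (rbm_f n m J h g))\<^sup>2 *
       ln (8 * real n * 2 ^ max_degree n (rbm_f n m J h g) / \<delta>) / \<epsilon>\<^sup>2 \<longrightarrow>
    \<zeta> * real (psi_param n (rbm_f n m J h g)) *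
       sqrt (1 + exp (2 * gamma_param n (rbm_f n m J h g))) \<le> sqrt \<epsilon> \<longrightarrow>
    sample_prob n m J h g M
       (\<lambda>S. \<forall>u<n. pred_mse n m J h g u (nb u) (What u S) \<le> \<epsilon>) \<ge> 1 - \<delta>"
proof (rule exI[of _ 128], intro conjI allI impI)
  show "(0::real) < 128" by simp
  fix n m J h g \<delta> \<epsilon> \<zeta> nb M What
  assume d: "(\<delta>::real) > 0" and e: "(\<epsilon>::real) > 0" and z: "(\<zeta>::real) > 0"
    and NB: "\<forall>u<n. nb u \<subseteq> mrf_nbhd n (rbm_f n m J h g) u \<and>
       (\<forall>i T. T \<subseteq> {..<n} \<and> u \<in> T \<and> i \<in> T \<and> i \<noteq> u \<and>
              \<bar>fourier_coeff n (rbm_f n m J h g) T\<bar> \<ge> \<zeta> \<longrightarrow> i \<in> nb u)"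
    and REG: "\<forall>u<n. \<forall>S\<in>PiE {..<M} (\<lambda>_. cube n).
       is_regression_estimate (nb u) u M S (gamma_param n (rbm_f n m J h g)) (What u S)"
    and MB: "real M \<ge> 128 * (gamma_param n (rbm_f n m J h g))\<^sup>2 *
       ln (8 * real n * 2 ^ max_degree n (rbm_f n m J h g) / \<delta>) / \<epsilon>\<^sup>2"
    and ZB: "\<zeta> * real (psi_param n (rbm_f n m J h g)) *
       sqrt (1 + exp (2 * gamma_param n (rbm_f n m J h g))) \<le> sqrt \<epsilon>"
  define ff where "ff = rbm_f n m J h g"
  define \<gamma> where "\<gamma> = gamma_param n ff"
  define D where "D = max_degree n ff"
  define p where "p = rbm_marginal n m J h g"
  have pnn: "\<And>x. x \<in> cube n \<Longrightarrow> p x \<ge> 0" using marg_pos by (simp add: p_def less_imp_le)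
  have p1: "sum p (cube n) = 1" by (simp add: p_def marg_sum)
  have fin: "finite (cube n)" by (rule finite_cube)
  have nbsub: "nb u \<subseteq> {..<n}" "u \<notin> nb u" if "u < n" for u
    using NB that unfolding mrf_nbhd_def by auto
  have hypu: "\<And>i T. T \<subseteq> {..<n} \<Longrightarrow> u \<in> T \<Longrightarrow> i \<in> T \<Longrightarrow> i \<noteq> u \<Longrightarrow> \<zeta> \<le> \<bar>fourier_coeff n ff T\<bar> \<Longrightarrow> i \<in> nb u"
    if "u < n" for u using NB that unfolding ff_def by blast
  have cardD: "card (nb u) \<le> D" if u: "u < n" for u
  proof -
    have f: "finite (mrf_nbhd n ff u)" unfolding mrf_nbhd_def by simp
    have "card (nb u) \<le> card (mrf_nbhd n ff u)" using NB u f unfolding ff_def by (intro card_mono) auto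
    also have "\<dots> \<le> D" unfolding D_def max_degree_def using u by (intro Max_ge) auto
    finally show ?thesis .
  qed
  have gamu: "(\<Sum>T\<in>Tu n u. \<bar>fourier_coeff n ff T\<bar>) \<le> \<gamma>" if u: "u < n" for u
    unfolding \<gamma>_def gamma_param_def Tu_def using u by (intro Max_ge) auto
  have psiu: "real (card {T. T \<subseteq> {..<n} \<and> u \<in> T \<and> fourier_coeff n ff T \<noteq> 0}) \<le> real (psi_param n ff)"
    if u: "u < n" for u
    unfolding psi_param_def using u by (subst of_nat_le_iff) (intro Max_ge, auto)
  have g0: "\<gamma> \<ge> 0" unfolding \<gamma>_def gamma_param_def by (intro Max_ge) auto
  have ZB': "\<zeta> * real (psi_param n ff) * sqrt (1 + exp (2 * \<gamma>)) \<le> sqrt \<epsilon>"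
    using ZB by (simp add: ff_def \<gamma>_def)
  have SP: "sample_prob n m J h g M (\<lambda>S. \<forall>u<n. pred_mse n m J h g u (nb u) (What u S) \<le> \<epsilon>)
      = EE (cube n) p M (\<lambda>S. if \<forall>u<n. pred_mse n m J h g u (nb u) (What u S) \<le> \<epsilon> then 1 else 0)"
    by (simp add: sample_prob_EE p_def)
  show "sample_prob n m J h g M (\<lambda>S. \<forall>u<n. pred_mse n m J h g u (nb u) (What u S) \<le> \<epsilon>) \<ge> 1 - \<delta>"
  proof (cases "\<delta> \<ge> 1")
    case True
    have "0 \<le> EE (cube n) p M (\<lambda>S. if \<forall>u<n. pred_mse n m J h g u (nb u) (What u S) \<le> \<epsilon> then 1 else 0)"
      by (rule EE_nonneg[OF pnn]) auto
    thus ?thesis using True SP by simp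
  next
    case dl: False
    show ?thesis
    proof (cases "\<gamma> = 0")
      case True
      have allgood: "pred_mse n m J h g u (nb u) (What u S) \<le> \<epsilon>"
        if u: "u < n" and S: "S \<in> PiE {..<M} (\<lambda>_. cube n)" for u S
      proof -
        have l1a: "l1_norm (nb u) (What u S) \<le> 0"
          using REG u S True by (simp add: is_regression_estimate_def \<gamma>_def ff_def)
        have l1b: "l1_norm (nb u) (wt n ff u) \<le> 0"
          using l1_wt[OF u nbsub(2)[OF u] nbsub(1)[OF u], of ff] gamu[OF u] True by simp
        have "Lpop n m J h g u (nb u) (What u S) = Lpop n m J h g u (nb u) (wt n ff u)"
          unfolding Lpop_def
        proof (intro sum.cong refl)
          fix x assume x: "x \<in> cube n"
          have "feat_dot (nb u) (What u S) x = 0" "feat_dot (nb u) (wt n ff u) x = 0"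
            using feat_abs[OF x nbsub(1)[OF u], of "What u S"] feat_abs[OF x nbsub(1)[OF u], of "wt n ff u"] l1a l1b
            by auto
          thus "rbm_marginal n m J h g x * lg (x u * feat_dot (nb u) (What u S) x)
              = rbm_marginal n m J h g x * lg (x u * feat_dot (nb u) (wt n ff u) x)" by simp
        qed
        hence L: "Lpop n m J h g u (nb u) (What u S) - Lpop n m J h g u (nb u) (wt n (rbm_f n m J h g) u) \<le> \<epsilon>"
          using e by (simp add: ff_def)
        show ?thesis
          by (rule det_u[OF u nbsub(2)[OF u] nbsub(1)[OF u] z e hypu[OF u, unfolded ff_def]
                gamu[OF u, unfolded ff_def] psiu[OF u, unfolded ff_def] ZB'[unfolded ff_def] L])
      qed
      have "1 = EE (cube n) p M (\<lambda>S. 1)" using EE_one[OF fin p1] by simp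
      also have "\<dots> \<le> EE (cube n) p M (\<lambda>S. if \<forall>u<n. pred_mse n m J h g u (nb u) (What u S) \<le> \<epsilon> then 1 else 0)"
        by (rule EE_mono_PiE[OF pnn]) (use allgood in auto)
      finally show ?thesis using SP d by simp
    next
      case False
      hence gpos: "\<gamma> > 0" using g0 by simp
      have n0: "n > 0"
      proof (rule ccontr)
        assume "\<not> n > 0"
        hence "n = 0" by simp
        hence "\<gamma> = 0" by (simp add: \<gamma>_def gamma_param_def)
        thus False using False by simp
      qed
      define L where "L = ln (8 * real n * 2 ^ D / \<delta>)"
      have Lpos: "L > 0"
      proof -
        have "1 * 1 \<le> real n * 2 ^ D" using n0 by (intro mult_mono) auto
        hence "8 \<le> 8 * real n * 2 ^ D" by simp
        hence "1 < 8 * real n * 2 ^ D / \<delta>" using d dl by (simp add: field_simps)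
        thus ?thesis by (simp add: L_def)
      qed
      have MB': "real M \<ge> 128 * \<gamma>\<^sup>2 * L / \<epsilon>\<^sup>2" using MB by (simp add: L_def D_def \<gamma>_def ff_def)
      have Mpos: "M > 0"
      proof -
        have "0 < 128 * \<gamma>\<^sup>2 * L / \<epsilon>\<^sup>2" using gpos Lpos e by simp
        thus ?thesis using MB' by linarith
      qed
      have MB2: "L \<le> real M * \<epsilon>\<^sup>2 / (128 * \<gamma>\<^sup>2)"
        using MB' gpos e by (simp add: field_simps)
      have bad: "EE (cube n) p M (\<lambda>S. if pred_mse n m J h g u (nb u) (What u S) \<le> \<epsilon> then 0 else 1) \<le> \<delta> / (2 * real n)"
        if u: "u < n" for u
      proof -
        have REGu: "\<And>S. S \<in> PiE {..<M} (\<lambda>_. cube n) \<Longrightarrow> is_regression_estimate (nb u) u M S \<gamma> (What u S)"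
          using REG u unfolding \<gamma>_def ff_def by blast
        show ?thesis unfolding p_def
        by (rule per_u[OF u nbsub(2)[OF u] nbsub(1)[OF u] cardD[OF u] z e d hypu[OF u, unfolded ff_def]
              gamu[OF u, unfolded ff_def] gpos psiu[OF u, unfolded ff_def] ZB'[unfolded ff_def] REGu Mpos MB2[unfolded L_def]])
      qed
      have "1 - \<delta> \<le> 1 - (\<Sum>u<n. \<delta> / (2 * real n))" using n0 d by simp
      also have "\<dots> \<le> 1 - (\<Sum>u<n. EE (cube n) p M (\<lambda>S. if pred_mse n m J h g u (nb u) (What u S) \<le> \<epsilon> then 0 else 1))"
        using bad by (intro diff_left_mono sum_mono) auto
      also have "\<dots> = EE (cube n) p M (\<lambda>S. 1 - (\<Sum>u<n. if pred_mse n m J h g u (nb u) (What u S) \<le> \<epsilon> then 0 else 1))"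
        by (simp add: EE_diff EE_sum EE_one[OF fin p1])
      also have "\<dots> \<le> EE (cube n) p M (\<lambda>S. if \<forall>u<n. pred_mse n m J h g u (nb u) (What u S) \<le> \<epsilon> then 1 else 0)"
        by (rule EE_mono[OF pnn], assumption, rule union_pw)
      finally show ?thesis using SP by simp
    qed
  qed
qed

end
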